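(* Let $\rho\in V_0$ be dominant. Then the linear map $\Psi:\mathcal B=\bigoplus_d\mathcal B_d\to\overline{\mathcal B}=\bigoplus_d\overline{\mathcal B}_d$ (induced by the isomorphisms $\mathcal B_d\to\overline{\mathcal B}_d$) is an isomorphism of algebras, and with $\psi:\mathcal P^W=\bigoplus_d\mathcal P^W_d\to\overline{\mathcal P}^W$ (induced by the isomorphisms $\mathcal P^W_d\to\overline{\mathcal P}^W_d$) one has $$\psi(Xh)=\Psi(X)\,\psi(h)\qquad\text{for all }X\in\mathcal B,\ h\in\mathcal P^W.$$
   Context: Setting: $V$ is a finite-dimensional complex vector space, $W\subseteq GL(V)$ a finite reflection group, $\Lambda_+\subseteq V$ a finitely generated submonoid whose minimal set of generators $\Sigma^\vee$ is a basis of $V$, and $\ell:V\to\mathbb C$ a $W$-invariant linear form with $\ell(\Lambda_+)\subseteq\mathbb N$; these data satisfy the axioms of F. Knop, "Construction of commuting difference operators for multiplicity free spaces" (the combinatorial data attached to multiplicity free representations). Notation: $\Gamma^\vee=\mathbb Z\Lambda_+$, $\Gamma\subseteq V^\vee$ its dual lattice, $\Sigma\subseteq V^\vee$ the dual basis of $\Sigma^\vee$, $\Phi=\bigcup_{w\in W}w\Sigma$, $\Delta\subseteq\Gamma$ the root system of $W$ with roots primitive in $\Gamma$, $\Delta^+=\{\alpha\in\Delta:\alpha(\Sigma^\vee)\ge0\}$, $\Lambda_1=\{w\eta:w\in W,\eta\in\Sigma^\vee,\ell(\eta)=1\}$. $V_0$ is the set of $\rho\in V$ with $\omega_1(\rho)=\omega_2(\rho)$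 whenever $\omega_1,\omega_2\in\Sigma$, $\omega_1\in\pm W\omega_2$; for $\rho\in V_0$, $\omega\in\pm\Phi$, $k_\omega:=\omega_1(\rho)$ with $\omega_1\in(\pm W\omega)\cap\Sigma$. $\rho\in V_0$ is dominant if $\alpha(\rho)\notin\mathbb Z_{<0}$ for all $\alpha\in\Delta^+$. $\mathcal P$ = polynomial functions on $V$. Known: for $\rho$ dominant and $\lambda\in\Lambda_+$ there is a unique $p_\lambda\in\mathcal P^W$ with $\deg p_\lambda\le\ell(\lambda)$ and $p_\lambda(\rho+\mu)=\delta_{\lambda\mu}$ for all $\mu\in\Lambda_+$ with $\ell(\mu)\le\ell(\lambda)$; the $p_\lambda$ with $\ell(\lambda)\le d$ form a basis of $\mathcal P^W_{\le d}=\{p\in\mathcal P^W:\deg p\le d\}$. Difference operators: $[z\downarrow d]=z(z-1)\cdots(z-d+1)$ for $d>0$, $=1$ otherwise; for $\tau\in\Gamma^\vee$, $f_\tau(z)=\prod_{\omega\in\Phi}[\omega(z)-k_\omega\downarrow\omega(\tau)]\big/\prod_{\alpha\in\Delta}[\alpha(z)\downarrow\alpha(\tau)]$; $(T_\eta f)(z)=f(z-\eta)$; $L=\sum_{\eta\in\Lambda_1}f_\eta(z)T_\eta$, which preserves $\mathcal P^W$; with $m_h$ multiplication by $h$, $D_h:=\sum_{n\ge0}\frac1{n!}(\mathrm{ad}L)^n(m_h)$ (finite sum) satisfies $D_h(p_\lambda)=h(\rho+\lambda)p_\lambda$; $E:=D_\ell=m_\ell-L$. For an operator $X$ on $\mathcal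 P^W$, $X^-(g):=(X(g^-))^-$ with $g^-(z)=g(-z)$; $\mathcal B$ is the algebra of operators on $\mathcal P^W$ generated by all $m_h$, $L$, $L^-$. Filtrations and gradings: $\overline{\mathcal P}^W_d=\mathcal P^W_{\le d}/\mathcal P^W_{\le d-1}$, $\overline{\mathcal P}^W=\bigoplus_d\overline{\mathcal P}^W_d$. For $X\in\mathcal B$, $\deg X:=\max\{\deg X(h)-\deg h: h\in\mathcal P^W\}$; $\mathcal B_{\le d}=\{X\in\mathcal B:\deg X\le d\}$, $\overline{\mathcal B}_d=\mathcal B_{\le d}/\mathcal B_{\le d-1}$, $\overline{\mathcal B}=\bigoplus_d\overline{\mathcal B}_d$ (the associated graded algebra, acting on $\overline{\mathcal P}^W$). $\mathcal P^W_d:=\{h\in\mathcal P^W:E(h)=(d+\ell(\rho))h\}$ (spanned by the $p_\lambda$ with $\ell(\lambda)=d$) and $\mathcal B_d:=\{X\in\mathcal B:[E,X]=dX\}$. It holds that $\mathcal P^W=\bigoplus_d\mathcal P^W_d$, $\mathcal P^W_{\le d}=\bigoplus_{i\le d}\mathcal P^W_i$, $\mathcal B=\bigoplus_d\mathcal B_d$ and $\mathcal B_{\le d}=\bigoplus_{i\le d}\mathcal B_i$, so the projections $\mathcal P^W_d\to\overline{\mathcal P}^W_d$ and $\mathcal B_d\to\overline{\mathcal B}_d$ are isomorphisms. *)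

theory Defs
  imports "HOL-Analysis.Analysis" "HOL-Library.Function_Algebras"
begin

(* Coordinates: V = complex^'n, with the basis Sigma^vee = the standard basis (axis i 1).
   Linear forms on V are represented by their coefficient vectors c, acting by pair c x. *)

type_synonym 'n fn = "complex^'n \<Rightarrow> complex"
type_synonym 'n op = "'n fn \<Rightarrow> 'n fn"

definition pair :: "complex^'n \<Rightarrow> complex^'n \<Rightarrow> complex" where
  "pair c x = (\<Sum>i\<in>UNIV. c$i * x$i)"

definition is_reflection :: "complex^'n^'n \<Rightarrow> bool" where
  "is_reflection s \<longleftrightarrow> s ** s = mat 1 \<and> s \<noteq> mat 1 \<and>
     (\<exists>a. a \<noteq> 0 \<and> {x. s *v x = x} = {x. pair a x = 0})"

inductive_set gen_by :: "(complex^'n^'n) set \<Rightarrow> (complex^'n^'n) set" for S where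
  gen_one: "mat 1 \<in> gen_by S"
| gen_mult: "s \<in> S \<Longrightarrow> w \<in> gen_by S \<Longrightarrow> s ** w \<in> gen_by S"

definition finite_reflection_group :: "(complex^'n^'n) set \<Rightarrow> bool" where
  "finite_reflection_group W \<longleftrightarrow> finite W \<and> mat 1 \<in> W \<and>
     (\<forall>a\<in>W. \<forall>b\<in>W. a ** b \<in> W) \<and> W = gen_by {s\<in>W. is_reflection s}"

(* Gamma^vee = Z Lambda_+ (integer coordinate vectors); Gamma = its dual lattice
   (integer coefficient linear forms); Lambda_+ = monoid generated by the basis Sigma^vee *)
definition Gamma :: "(complex^'n) set" where
  "Gamma = {c. \<forall>i. c$i \<in> \<int>}"

definition Lambda_plus :: "(complex^'n) set" where
  "Lambda_plus = {x. \<forall>i. x$i \<in> \<nat>}"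

definition primitive :: "complex^'n \<Rightarrow> bool" where
  "primitive \<alpha> \<longleftrightarrow> \<alpha> \<in> Gamma \<and> \<alpha> \<noteq> 0 \<and>
     (\<forall>\<beta>\<in>Gamma. \<forall>k::int. \<alpha> = of_int k *s \<beta> \<longrightarrow> \<bar>k\<bar> = 1)"

definition roots :: "(complex^'n^'n) set \<Rightarrow> (complex^'n) set" where
  "roots W = {\<alpha>. primitive \<alpha> \<and>
      (\<exists>s\<in>W. is_reflection s \<and> {x. s *v x = x} = {x. pair \<alpha> x = 0})}"

definition pos_roots :: "(complex^'n^'n) set \<Rightarrow> (complex^'n) set" where
  "pos_roots W = {\<alpha>\<in>roots W. \<forall>i. 0 \<le> Re (pair \<alpha> (axis i 1))}"

(* w acts on linear forms by (w omega)(x) = omega(w^{-1} x); as W is a group,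
   the orbit W omega is {omega v* w | w in W} *)
definition orbit :: "(complex^'n^'n) set \<Rightarrow> complex^'n \<Rightarrow> (complex^'n) set" where
  "orbit W \<omega> = {\<omega> v* w | w. w \<in> W}"

definition pm_orbit :: "(complex^'n^'n) set \<Rightarrow> complex^'n \<Rightarrow> (complex^'n) set" where
  "pm_orbit W \<omega> = orbit W \<omega> \<union> uminus ` orbit W \<omega>"

definition Phi :: "(complex^'n^'n) set \<Rightarrow> (complex^'n) set" where
  "Phi W = (\<Union>i. orbit W (axis i 1))"

definition V0 :: "(complex^'n^'n) set \<Rightarrow> (complex^'n) set" where
  "V0 W = {\<rho>. \<forall>i j. axis i 1 \<in> pm_orbit W (axis j 1) \<longrightarrow> \<rho>$i = \<rho>$j}"

(* k_omega = omega_1(rho) for omega_1 in (pm W omega) \<inter> Sigma *)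
definition kk :: "(complex^'n^'n) set \<Rightarrow> complex^'n \<Rightarrow> complex^'n \<Rightarrow> complex" where
  "kk W \<rho> \<omega> = \<rho> $ (SOME i. axis i 1 \<in> pm_orbit W \<omega>)"

definition dominant :: "(complex^'n^'n) set \<Rightarrow> complex^'n \<Rightarrow> bool" where
  "dominant W \<rho> \<longleftrightarrow> \<rho> \<in> V0 W \<and>
     (\<forall>\<alpha>\<in>pos_roots W. \<not> (\<exists>k::int. k < 0 \<and> pair \<alpha> \<rho> = of_int k))"

definition Lambda1 :: "(complex^'n^'n) set \<Rightarrow> complex^'n \<Rightarrow> (complex^'n) set" where
  "Lambda1 W l = {w *v axis i 1 | w i. w \<in> W \<and> pair l (axis i 1) = 1}"

definition ff :: "complex \<Rightarrow> int \<Rightarrow> complex" where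
  "ff z d = (if d > 0 then (\<Prod>j\<in>{0..<nat d}. z - of_nat j) else 1)"

(* the exponent omega(tau) (an integer in the intended situation) *)
definition ival :: "complex \<Rightarrow> int" where
  "ival c = \<lfloor>Re c\<rfloor>"

definition fnum :: "(complex^'n^'n) set \<Rightarrow> complex^'n \<Rightarrow> complex^'n \<Rightarrow> 'n fn" where
  "fnum W \<rho> \<tau> z = (\<Prod>\<omega>\<in>Phi W. ff (pair \<omega> z - kk W \<rho> \<omega>) (ival (pair \<omega> \<tau>)))"

definition fden :: "(complex^'n^'n) set \<Rightarrow> complex^'n \<Rightarrow> 'n fn" where
  "fden W \<tau> z = (\<Prod>\<alpha>\<in>roots W. ff (pair \<alpha> z) (ival (pair \<alpha> \<tau>)))"

definition ftau :: "(complex^'n^'n) set \<Rightarrow> complex^'n \<Rightarrow> complex^'n \<Rightarrow> 'n fn" where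
  "ftau W \<rho> \<tau> z = fnum W \<rho> \<tau> z / fden W \<tau> z"

definition Lformula :: "(complex^'n^'n) set \<Rightarrow> complex^'n \<Rightarrow> complex^'n \<Rightarrow> 'n fn \<Rightarrow> 'n fn" where
  "Lformula W l \<rho> p z = (\<Sum>\<eta>\<in>Lambda1 W l. ftau W \<rho> \<eta> z * p (z - \<eta>))"

definition regular_pt :: "(complex^'n^'n) set \<Rightarrow> complex^'n \<Rightarrow> complex^'n \<Rightarrow> bool" where
  "regular_pt W l z \<longleftrightarrow> (\<forall>\<eta>\<in>Lambda1 W l. fden W \<eta> z \<noteq> 0)"

definition mono :: "(('n::finite) \<Rightarrow> nat) \<Rightarrow> 'n fn" where
  "mono a x = (\<Prod>i\<in>UNIV. (x$i) ^ a i)"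

definition poly_le :: "int \<Rightarrow> ('n::finite) fn set" where
  "poly_le d = {p. \<exists>c. p = (\<lambda>x. \<Sum>a\<in>{a::'n\<Rightarrow>nat. int (sum a UNIV) \<le> d}. c a * mono a x)}"

definition Polys :: "('n::finite) fn set" where
  "Polys = (\<Union>d. poly_le d)"

definition PW :: "(complex^('n::finite)^'n) set \<Rightarrow> 'n fn set" where
  "PW W = {p\<in>Polys. \<forall>w\<in>W. \<forall>x. p (w *v x) = p x}"

definition PWle :: "(complex^('n::finite)^'n) set \<Rightarrow> int \<Rightarrow> 'n fn set" where
  "PWle W d = PW W \<inter> poly_le d"

definition Lop :: "(complex^('n::finite)^'n) set \<Rightarrow> complex^'n \<Rightarrow> complex^'n \<Rightarrow> 'n op" where
  "Lop W l \<rho> p = (THE q. q \<in> Polys \<and> (\<forall>z. regular_pt W l z \<longrightarrow> q z = Lformula W l \<rho> p z))"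

definition L_preserves :: "(complex^('n::finite)^'n) set \<Rightarrow> complex^'n \<Rightarrow> complex^'n \<Rightarrow> bool" where
  "L_preserves W l \<rho> \<longleftrightarrow> (\<forall>p\<in>PW W. \<exists>q\<in>PW W. \<forall>z. regular_pt W l z \<longrightarrow> q z = Lformula W l \<rho> p z)"

(* operators on P^W, normalized to be 0 outside P^W *)
definition restr :: "(complex^('n::finite)^'n) set \<Rightarrow> 'n op \<Rightarrow> 'n op" where
  "restr W X = (\<lambda>g. if g \<in> PW W then X g else 0)"

definition negf :: "('n::finite) fn \<Rightarrow> 'n fn" where
  "negf g = (\<lambda>z. g (- z))"

definition Lminus :: "(complex^('n::finite)^'n) set \<Rightarrow> complex^'n \<Rightarrow> complex^'n \<Rightarrow> 'n op" where
  "Lminus W l \<rho> g = negf (Lop W l \<rho> (negf g))"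

definition mult :: "('n::finite) fn \<Rightarrow> 'n op" where
  "mult h g = (\<lambda>z. h z * g z)"

definition op_smul :: "complex \<Rightarrow> ('n::finite) op \<Rightarrow> 'n op" where
  "op_smul c X = (\<lambda>g z. c * X g z)"

definition op_comp :: "(complex^('n::finite)^'n) set \<Rightarrow> 'n op \<Rightarrow> 'n op \<Rightarrow> 'n op" where
  "op_comp W X Y = restr W (X \<circ> Y)"

inductive_set Balg :: "(complex^('n::finite)^'n) set \<Rightarrow> complex^'n \<Rightarrow> complex^'n \<Rightarrow> 'n op set"
  for W l \<rho> where
  B_mult: "h \<in> PW W \<Longrightarrow> restr W (mult h) \<in> Balg W l \<rho>"
| B_L: "restr W (Lop W l \<rho>) \<in> Balg W l \<rho>"
| B_Lminus: "restr W (Lminus W l \<rho>) \<in> Balg W l \<rho>"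
| B_add: "X \<in> Balg W l \<rho> \<Longrightarrow> Y \<in> Balg W l \<rho> \<Longrightarrow> X + Y \<in> Balg W l \<rho>"
| B_smul: "X \<in> Balg W l \<rho> \<Longrightarrow> op_smul c X \<in> Balg W l \<rho>"
| B_comp: "X \<in> Balg W l \<rho> \<Longrightarrow> Y \<in> Balg W l \<rho> \<Longrightarrow> op_comp W X Y \<in> Balg W l \<rho>"

definition Eop :: "(complex^('n::finite)^'n) set \<Rightarrow> complex^'n \<Rightarrow> complex^'n \<Rightarrow> 'n op" where
  "Eop W l \<rho> = restr W (\<lambda>g. mult (pair l) g - Lop W l \<rho> g)"

definition Pd :: "(complex^('n::finite)^'n) set \<Rightarrow> complex^'n \<Rightarrow> complex^'n \<Rightarrow> int \<Rightarrow> 'n fn set" where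
  "Pd W l \<rho> d = {h\<in>PW W. Eop W l \<rho> h = (\<lambda>z. (of_int d + pair l \<rho>) * h z)}"

definition Bd :: "(complex^('n::finite)^'n) set \<Rightarrow> complex^'n \<Rightarrow> complex^'n \<Rightarrow> int \<Rightarrow> 'n op set" where
  "Bd W l \<rho> d = {X\<in>Balg W l \<rho>.
      op_comp W (Eop W l \<rho>) X - op_comp W X (Eop W l \<rho>) = op_smul (of_int d) X}"

definition Ble :: "(complex^('n::finite)^'n) set \<Rightarrow> complex^'n \<Rightarrow> complex^'n \<Rightarrow> int \<Rightarrow> 'n op set" where
  "Ble W l \<rho> d = {X\<in>Balg W l \<rho>. \<forall>e h. h \<in> PWle W e \<longrightarrow> X h \<in> PWle W (e + d)}"

definition is_decomp :: "(int \<Rightarrow> 'a::comm_monoid_add set) \<Rightarrow> (int \<Rightarrow> 'a) \<Rightarrow> 'a \<Rightarrow> bool" where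
  "is_decomp A c x \<longleftrightarrow> (\<forall>i. c i \<in> A i) \<and> finite {i. c i \<noteq> 0} \<and> x = (\<Sum>i\<in>{i. c i \<noteq> 0}. c i)"

definition comp :: "(int \<Rightarrow> 'a::comm_monoid_add set) \<Rightarrow> 'a \<Rightarrow> int \<Rightarrow> 'a" where
  "comp A x = (THE c. is_decomp A c x)"

definition P_decomp :: "(complex^('n::finite)^'n) set \<Rightarrow> complex^'n \<Rightarrow> complex^'n \<Rightarrow> bool" where
  "P_decomp W l \<rho> \<longleftrightarrow> (\<forall>h\<in>PW W. \<exists>!c. is_decomp (Pd W l \<rho>) c h) \<and>
     (\<forall>d. PWle W d = {h. \<exists>c. is_decomp (Pd W l \<rho>) c h \<and> (\<forall>i>d. c i = 0)})"

definition B_decomp :: "(complex^('n::finite)^'n) set \<Rightarrow> complex^'n \<Rightarrow> complex^'n \<Rightarrow> bool" where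
  "B_decomp W l \<rho> \<longleftrightarrow> (\<forall>X\<in>Balg W l \<rho>. \<exists>!c. is_decomp (Bd W l \<rho>) c X) \<and>
     (\<forall>d. Ble W l \<rho> d = {X. \<exists>c. is_decomp (Bd W l \<rho>) c X \<and> (\<forall>i>d. c i = 0)})"

(* associated graded objects; elements of \<overline>P^W_d resp. \<overline>B_d are cosets *)
definition rep :: "'a set \<Rightarrow> 'a" where
  "rep A = (SOME x. x \<in> A)"

definition pcos :: "(complex^('n::finite)^'n) set \<Rightarrow> int \<Rightarrow> 'n fn \<Rightarrow> 'n fn set" where
  "pcos W d h = {h + k | k. k \<in> PWle W (d - 1)}"

definition bcos :: "(complex^('n::finite)^'n) set \<Rightarrow> complex^'n \<Rightarrow> complex^'n \<Rightarrow> int \<Rightarrow> 'n op \<Rightarrow> 'n op set" where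
  "bcos W l \<rho> d X = {X + Y | Y. Y \<in> Ble W l \<rho> (d - 1)}"

definition bsupp :: "(complex^('n::finite)^'n) set \<Rightarrow> complex^'n \<Rightarrow> complex^'n \<Rightarrow> (int \<Rightarrow> 'n op set) \<Rightarrow> int set" where
  "bsupp W l \<rho> a = {d. a d \<noteq> Ble W l \<rho> (d - 1)}"

definition Bbar :: "(complex^('n::finite)^'n) set \<Rightarrow> complex^'n \<Rightarrow> complex^'n \<Rightarrow> (int \<Rightarrow> 'n op set) set" where
  "Bbar W l \<rho> = {a. (\<forall>d. \<exists>X\<in>Ble W l \<rho> d. a d = bcos W l \<rho> d X) \<and> finite (bsupp W l \<rho> a)}"

definition badd :: "(complex^('n::finite)^'n) set \<Rightarrow> complex^'n \<Rightarrow> complex^'n \<Rightarrow>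
    (int \<Rightarrow> 'n op set) \<Rightarrow> (int \<Rightarrow> 'n op set) \<Rightarrow> (int \<Rightarrow> 'n op set)" where
  "badd W l \<rho> a b = (\<lambda>d. bcos W l \<rho> d (rep (a d) + rep (b d)))"

definition bsmul :: "(complex^('n::finite)^'n) set \<Rightarrow> complex^'n \<Rightarrow> complex^'n \<Rightarrow>
    complex \<Rightarrow> (int \<Rightarrow> 'n op set) \<Rightarrow> (int \<Rightarrow> 'n op set)" where
  "bsmul W l \<rho> c a = (\<lambda>d. bcos W l \<rho> d (op_smul c (rep (a d))))"

definition bmul :: "(complex^('n::finite)^'n) set \<Rightarrow> complex^'n \<Rightarrow> complex^'n \<Rightarrow>
    (int \<Rightarrow> 'n op set) \<Rightarrow> (int \<Rightarrow> 'n op set) \<Rightarrow> (int \<Rightarrow> 'n op set)" where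
  "bmul W l \<rho> a b = (\<lambda>d. bcos W l \<rho> d
      (\<Sum>i\<in>bsupp W l \<rho> a. op_comp W (rep (a i)) (rep (b (d - i)))))"

definition bone :: "(complex^('n::finite)^'n) set \<Rightarrow> complex^'n \<Rightarrow> complex^'n \<Rightarrow> (int \<Rightarrow> 'n op set)" where
  "bone W l \<rho> = (\<lambda>d. if d = 0 then bcos W l \<rho> 0 (restr W id) else Ble W l \<rho> (d - 1))"

definition bact :: "(complex^('n::finite)^'n) set \<Rightarrow> complex^'n \<Rightarrow> complex^'n \<Rightarrow>
    (int \<Rightarrow> 'n op set) \<Rightarrow> (int \<Rightarrow> 'n fn set) \<Rightarrow> (int \<Rightarrow> 'n fn set)" where
  "bact W l \<rho> a u = (\<lambda>e. pcos W e (\<Sum>d\<in>bsupp W l \<rho> a. rep (a d) (rep (u (e - d)))))"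

definition Psi :: "(complex^('n::finite)^'n) set \<Rightarrow> complex^'n \<Rightarrow> complex^'n \<Rightarrow> 'n op \<Rightarrow> (int \<Rightarrow> 'n op set)" where
  "Psi W l \<rho> X = (\<lambda>d. bcos W l \<rho> d (comp (Bd W l \<rho>) X d))"

definition psi :: "(complex^('n::finite)^'n) set \<Rightarrow> complex^'n \<Rightarrow> complex^'n \<Rightarrow> 'n fn \<Rightarrow> (int \<Rightarrow> 'n fn set)" where
  "psi W l \<rho> h = (\<lambda>d. pcos W d (comp (Pd W l \<rho>) h d))"

definition knop_data :: "(complex^('n::finite)^'n) set \<Rightarrow> complex^'n \<Rightarrow> bool" where
  "knop_data W l \<longleftrightarrow> finite_reflection_group W \<and>
     (\<forall>w\<in>W. \<forall>x. pair l (w *v x) = pair l x) \<and> (\<forall>x\<in>Lambda_plus. pair l x \<in> \<nat>)"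

end

theory Submission
  imports Defs
begin

lemma sum_apply_fun: "(sum F A) x = sum (\<lambda>a. F a x) A"
  by (induction A rule: infinite_finite_induct) auto

definition sm :: "complex \<Rightarrow> ('n::finite) fn \<Rightarrow> 'n fn" where
  "sm c g = (\<lambda>z. c * g z)"

lemma poly_cont: assumes "p \<in> Polys" shows "continuous_on UNIV p"
proof -
  from assms obtain d c where p: "p = (\<lambda>x. \<Sum>a\<in>{a::'a\<Rightarrow>nat. int (sum a UNIV) \<le> d}. c a * mono a x)"
    unfolding Polys_def poly_le_def by blast
  show ?thesis unfolding p mono_def
    by (intro continuous_intros)
qed

lemma mono_neg: "mono a (-x) = (-1)^(sum a UNIV) * mono a x"
proof -
  have "mono a (-x) = (\<Prod>i\<in>UNIV. (-1)^(a i) * (x$i)^(a i))"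
    unfolding mono_def by (intro prod.cong refl) (simp add: power_minus[of "x$_"])
  also have "\<dots> = (\<Prod>i\<in>UNIV. (-1::complex)^(a i)) * mono a x"
    unfolding mono_def by (rule prod.distrib)
  finally show ?thesis by (simp add: power_sum)
qed

lemma poly_le_negf: assumes "p \<in> poly_le d" shows "negf p \<in> poly_le d"
proof -
  from assms obtain c where p: "p = (\<lambda>x. \<Sum>a\<in>{a::'a\<Rightarrow>nat. int (sum a UNIV) \<le> d}. c a * mono a x)"
    unfolding poly_le_def by blast
  show ?thesis unfolding poly_le_def mem_Collect_eq negf_def p mono_neg
    by (rule exI[of _ "\<lambda>a. c a * (-1)^(sum a UNIV)"]) (simp add: algebra_simps)
qed

lemma poly_le_add: assumes "p \<in> poly_le d" "q \<in> poly_le d" shows "p + q \<in> poly_le d"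
proof -
  from assms obtain c c' where p: "p = (\<lambda>x. \<Sum>a\<in>{a::'a\<Rightarrow>nat. int (sum a UNIV) \<le> d}. c a * mono a x)"
    and q: "q = (\<lambda>x. \<Sum>a\<in>{a::'a\<Rightarrow>nat. int (sum a UNIV) \<le> d}. c' a * mono a x)"
    unfolding poly_le_def by blast
  show ?thesis unfolding poly_le_def mem_Collect_eq p q
    by (rule exI[of _ "\<lambda>a. c a + c' a"]) (simp add: algebra_simps sum.distrib fun_eq_iff)
qed

lemma poly_le_sm: assumes "p \<in> poly_le d" shows "sm k p \<in> poly_le d"
proof -
  from assms obtain c where p: "p = (\<lambda>x. \<Sum>a\<in>{a::'a\<Rightarrow>nat. int (sum a UNIV) \<le> d}. c a * mono a x)"
    unfolding poly_le_def by blast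
  show ?thesis unfolding poly_le_def mem_Collect_eq sm_def p
    by (rule exI[of _ "\<lambda>a. k * c a"]) (simp add: algebra_simps sum_distrib_left)
qed

lemma poly_le_one: "(1::'n::finite fn) \<in> poly_le 0"
proof -
  have S: "{a::'n\<Rightarrow>nat. int (sum a UNIV) \<le> 0} = {\<lambda>_. 0}"
  proof (intro equalityI subsetI)
    fix a :: "'n\<Rightarrow>nat" assume "a \<in> {a::'n\<Rightarrow>nat. int (sum a UNIV) \<le> 0}"
    hence "int (sum a UNIV) \<le> 0" by (simp only: mem_Collect_eq)
    hence "sum a UNIV = 0" by (simp only: of_nat_le_0_iff)
    hence "\<forall>i. a i = 0" using sum_eq_0_iff[OF finite[of UNIV], of a] by blast
    thus "a \<in> {\<lambda>_. 0}" by auto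
  qed auto
  show ?thesis unfolding poly_le_def mem_Collect_eq S
    by (rule exI[of _ "\<lambda>a. 1"]) (simp add: mono_def fun_eq_iff)
qed

lemma poly_le_zero: "(0::'n::finite fn) \<in> poly_le d"
  unfolding poly_le_def mem_Collect_eq by (rule exI[of _ "\<lambda>a. 0"]) (simp add: fun_eq_iff)

lemma PW_negf: assumes "p \<in> PW W" shows "negf p \<in> PW W"
proof -
  from assms obtain d where "p \<in> poly_le d" unfolding PW_def Polys_def by auto
  hence "negf p \<in> Polys" using poly_le_negf unfolding Polys_def by blast
  moreover have "\<forall>w\<in>W. \<forall>x. negf p (w *v x) = negf p x"
  proof (intro ballI allI)
    fix w x assume "w \<in> W"
    have "w *v (-x) = - (w *v x)" by (simp add: vec_eq_iff matrix_vector_mult_def sum_negf)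
    thus "negf p (w *v x) = negf p x" unfolding negf_def using assms \<open>w\<in>W\<close> unfolding PW_def
      by (metis (mono_tags, lifting) mem_Collect_eq)
  qed
  ultimately show ?thesis unfolding PW_def by blast
qed

lemma PWle_add: "p \<in> PWle W d \<Longrightarrow> q \<in> PWle W d \<Longrightarrow> p + q \<in> PWle W d"
  unfolding PWle_def PW_def Polys_def using poly_le_add by fastforce

lemma PWle_sm: "p \<in> PWle W d \<Longrightarrow> sm k p \<in> PWle W d"
  unfolding PWle_def PW_def Polys_def using poly_le_sm by (fastforce simp: sm_def)

lemma PWle_zero: "0 \<in> PWle W d"
  unfolding PWle_def PW_def Polys_def using poly_le_zero by fastforce

lemma PW_one: "1 \<in> PW W"
  unfolding PW_def Polys_def using poly_le_one by fastforce

lemma PW_ex_le: "p \<in> PW W \<Longrightarrow> \<exists>d. p \<in> PWle W d"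
  unfolding PW_def PWle_def Polys_def by auto

lemma pair_add: "pair a (x + y) = pair a x + pair a y"
  unfolding pair_def by (simp add: algebra_simps sum.distrib)

lemma pair_scaleR: "pair a (r *\<^sub>R v) = of_real r * pair a v"
  unfolding pair_def vector_scaleR_component by (simp add: scaleR_conv_of_real sum_distrib_left algebra_simps)

lemma norm_axis_c: "norm (axis i (1::complex) :: complex^'n::finite) = 1"
proof -
  have "(\<Sum>j\<in>UNIV. (norm (axis i (1::complex) $ j))\<^sup>2) = (\<Sum>j\<in>UNIV. if j = i then (1::real) else 0)"
    by (intro sum.cong refl) (simp add: axis_def)
  also have "\<dots> = 1" by simp
  finally show ?thesis unfolding norm_vec_def L2_set_def by simp
qed

lemma pair_axis: "pair a (axis i 1) = a $ i"
  unfolding pair_def axis_def by (simp add: if_distrib cong: if_cong)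

lemma pair_cont: "continuous_on UNIV (pair a)"
  unfolding pair_def by (intro continuous_intros)

lemma hyper_closed: "closed {z. pair a z = c}"
  using closed_Collect_eq[of "pair a" "\<lambda>_. c"] pair_cont continuous_on_const by blast

lemma hyper_interior: assumes "a \<noteq> 0" shows "interior {z. pair a z = c} = {}"
proof (rule ccontr)
  assume "interior {z. pair a z = c} \<noteq> {}"
  then obtain z where "z \<in> interior {z. pair a z = c}" by blast
  then obtain e where e: "e > 0" "ball z e \<subseteq> {z. pair a z = c}"
    using mem_interior by blast
  from assms obtain i where i: "a $ i \<noteq> 0" by (metis vec_eq_iff zero_index)
  let ?z = "z + (e/2) *\<^sub>R axis i 1"
  have "dist z ?z = e/2" using e by (simp add: dist_norm norm_axis_c)
  hence "?z \<in> ball z e" using e by simp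
  hence "pair a ?z = c" using e by blast
  moreover have "pair a z = c" using e by (simp add: subset_eq)
  moreover have "pair a ?z = pair a z + of_real (e/2) * a $ i"
    by (simp add: pair_add pair_scaleR pair_axis)
  ultimately show False using i e by simp
qed

lemma finite_union_interior:
  assumes "finite F" "\<forall>S\<in>F. closed S \<and> interior S = {}"
  shows "interior (\<Union>F) = {}"
  using assms
proof (induction F rule: finite_induct)
  case (insert S F)
  hence "interior (S \<union> \<Union>F) = interior S"
    by (intro interior_closed_Un_empty_interior) auto
  thus ?case using insert by simp
qed simp

lemma dense_eq:
  fixes f g :: "'a::real_normed_vector \<Rightarrow> 'b::real_normed_vector"
  assumes "finite F" "\<forall>S\<in>F. closed S \<and> interior S = {}"
    and "\<forall>z. z \<notin> \<Union>F \<longrightarrow> f z = g z"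
    and "continuous_on UNIV f" "continuous_on UNIV g"
  shows "f = g"
proof -
  have I: "interior (\<Union>F) = {}" by (rule finite_union_interior[OF assms(1,2)])
  have "interior (- (- \<Union>F)) = {}" using I by simp
  hence cl: "closure (- \<Union>F) = UNIV" by (simp add: closure_interior)
  have "closed {z. f z = g z}" by (rule closed_Collect_eq[OF assms(4,5)])
  moreover have "- \<Union>F \<subseteq> {z. f z = g z}" using assms(3) by auto
  ultimately have "closure (- \<Union>F) \<subseteq> {z. f z = g z}" by (rule closure_minimal[rotated])
  thus ?thesis using cl by auto
qed

lemma finite_Lambda1: assumes "finite W" shows "finite (Lambda1 W l)"
proof -
  have "Lambda1 W l \<subseteq> (\<lambda>(w,i). w *v axis i 1) ` (W \<times> UNIV)"
    unfolding Lambda1_def by auto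
  thus ?thesis by (rule finite_subset) (use assms in auto)
qed

lemma roots_nz: "\<alpha> \<in> roots W \<Longrightarrow> \<alpha> \<noteq> 0"
  unfolding roots_def primitive_def by auto

lemma ff_zero: "ff x k = 0 \<Longrightarrow> \<exists>j. j < nat k \<and> x = of_nat j"
  unfolding ff_def by (auto split: if_splits)

lemma reg_unique:
  fixes f g :: "('n::finite) fn"
  assumes W: "finite W" and cf: "continuous_on UNIV f" and cg: "continuous_on UNIV g"
    and eq: "\<forall>z. regular_pt W l z \<longrightarrow> f z = g z"
  shows "f = g"
proof (cases "finite (roots W)")
  case False
  hence "\<forall>z. regular_pt W l z" unfolding regular_pt_def fden_def by simp
  thus ?thesis using eq by auto
next
  case True
  define P where "P = {(\<alpha>, j). \<alpha> \<in> roots W \<and> (\<exists>\<eta>\<in>Lambda1 W l. j < nat (ival (pair \<alpha> \<eta>)))}"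
  have "P \<subseteq> (\<Union>\<eta>\<in>Lambda1 W l. \<Union>\<alpha>\<in>roots W. (\<lambda>j. (\<alpha>, j)) ` {..<nat (ival (pair \<alpha> \<eta>))})"
    unfolding P_def by auto
  moreover have "finite (\<Union>\<eta>\<in>Lambda1 W l. \<Union>\<alpha>\<in>roots W. (\<lambda>j. (\<alpha>, j)) ` {..<nat (ival (pair \<alpha> \<eta>))})"
    using finite_Lambda1[OF W] True by auto
  ultimately have fP: "finite P" by (rule finite_subset)
  define F where "F = (\<lambda>(\<alpha>, j). {z. pair \<alpha> z = of_nat j}) ` P"
  have "finite F" unfolding F_def using fP by simp
  moreover have "\<forall>S\<in>F. closed S \<and> interior S = {}"
  proof
    fix S assume "S \<in> F"
    then obtain \<alpha> j where "S = {z. pair \<alpha> z = of_nat j}" "\<alpha> \<in> roots W"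
      unfolding F_def P_def by auto
    thus "closed S \<and> interior S = {}" using hyper_closed hyper_interior roots_nz by metis
  qed
  moreover have "\<forall>z. z \<notin> \<Union>F \<longrightarrow> f z = g z"
  proof (intro allI impI)
    fix z assume z: "z \<notin> \<Union>F"
    have "regular_pt W l z" unfolding regular_pt_def
    proof
      fix \<eta> assume \<eta>: "\<eta> \<in> Lambda1 W l"
      show "fden W \<eta> z \<noteq> 0"
      proof
        assume "fden W \<eta> z = 0"
        then obtain \<alpha> where \<alpha>: "\<alpha> \<in> roots W" "ff (pair \<alpha> z) (ival (pair \<alpha> \<eta>)) = 0"
          unfolding fden_def using True by (auto simp: prod_zero_iff)
        then obtain j where j: "j < nat (ival (pair \<alpha> \<eta>))" "pair \<alpha> z = of_nat j"
          using ff_zero by blast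
        have "(\<alpha>, j) \<in> P" unfolding P_def using \<alpha> j \<eta> by auto
        hence "z \<in> \<Union>F" unfolding F_def using j by force
        thus False using z by simp
      qed
    qed
    thus "f z = g z" using eq by simp
  qed
  ultimately show ?thesis using dense_eq cf cg by blast
qed

lemma is_decompI:
  assumes "\<forall>i. c i \<in> A i" "finite S" "{i. c i \<noteq> 0} \<subseteq> S" "x = (\<Sum>i\<in>S. c i)"
  shows "is_decomp A c x"
proof -
  have "(\<Sum>i\<in>S. c i) = (\<Sum>i\<in>{i. c i \<noteq> 0}. c i)"
    by (rule sum.mono_neutral_right) (use assms in auto)
  thus ?thesis unfolding is_decomp_def using assms finite_subset by auto
qed

lemma is_decomp_sum:
  assumes "is_decomp A c x" "finite S" "{i. c i \<noteq> 0} \<subseteq> S"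
  shows "x = (\<Sum>i\<in>S. c i)"
proof -
  have "(\<Sum>i\<in>S. c i) = (\<Sum>i\<in>{i. c i \<noteq> 0}. c i)"
    by (rule sum.mono_neutral_right) (use assms in auto)
  thus ?thesis using assms unfolding is_decomp_def by auto
qed

locale graded =
  fixes A :: "int \<Rightarrow> 'a::ab_group_add set" and M :: "'a set" and Le :: "int \<Rightarrow> 'a set"
  assumes ex1: "x \<in> M \<Longrightarrow> \<exists>!c. is_decomp A c x"
    and Le_eq: "Le d = {x. \<exists>c. is_decomp A c x \<and> (\<forall>i>d. c i = 0)}"
    and A_M: "x \<in> A i \<Longrightarrow> x \<in> M"
    and M0: "0 \<in> M"
    and Le0: "0 \<in> Le d"
    and Le_M: "x \<in> Le d \<Longrightarrow> x \<in> M"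
    and A_add: "x \<in> A i \<Longrightarrow> y \<in> A i \<Longrightarrow> x + y \<in> A i"
    and A_uminus: "x \<in> A i \<Longrightarrow> - x \<in> A i"
    and M_add: "x \<in> M \<Longrightarrow> y \<in> M \<Longrightarrow> x + y \<in> M"
    and M_uminus: "x \<in> M \<Longrightarrow> - x \<in> M"
begin

lemma comp_eq: "x \<in> M \<Longrightarrow> is_decomp A c x \<Longrightarrow> comp A x = c"
  unfolding comp_def using ex1 by (metis the_equality)

lemma comp_decomp: "x \<in> M \<Longrightarrow> is_decomp A (comp A x) x"
  unfolding comp_def using ex1 by (metis theI')

lemma comp_in: "x \<in> M \<Longrightarrow> comp A x i \<in> A i"
  using comp_decomp unfolding is_decomp_def by blast

lemma comp_fin: "x \<in> M \<Longrightarrow> finite {i. comp A x i \<noteq> 0}"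
  using comp_decomp unfolding is_decomp_def by blast

lemma comp_sum: "x \<in> M \<Longrightarrow> finite S \<Longrightarrow> {i. comp A x i \<noteq> 0} \<subseteq> S \<Longrightarrow> x = (\<Sum>i\<in>S. comp A x i)"
  using comp_decomp is_decomp_sum by blast

lemma comp_zero: "comp A 0 = (\<lambda>_. 0)"
proof -
  have "\<exists>c. is_decomp A c 0 \<and> (\<forall>i>d. c i = 0)" for d using Le0[of d] Le_eq by blast
  hence "\<forall>i>d. comp A 0 i = 0" for d using comp_eq[OF M0] by metis
  hence "comp A 0 i = 0" for i by (erule_tac x="i - 1" in meta_allE) simp
  thus ?thesis by auto
qed

lemma A0: "0 \<in> A i"
  using comp_in[OF M0, of i] comp_zero by simp

lemma A_diff: "x \<in> A i \<Longrightarrow> y \<in> A i \<Longrightarrow> x - y \<in> A i"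
  using A_add A_uminus by (metis diff_conv_add_uminus)

lemma A_sum: "finite S \<Longrightarrow> (\<forall>k\<in>S. f k \<in> A i) \<Longrightarrow> sum f S \<in> A i"
  by (induction S rule: finite_induct) (auto intro: A0 A_add)

lemma M_sum: "finite S \<Longrightarrow> (\<forall>k\<in>S. f k \<in> M) \<Longrightarrow> sum f S \<in> M"
  by (induction S rule: finite_induct) (auto intro: M0 M_add)

lemma M_diff: "x \<in> M \<Longrightarrow> y \<in> M \<Longrightarrow> x - y \<in> M"
  using M_add M_uminus by (metis diff_conv_add_uminus)

lemma comp_single: "x \<in> A i \<Longrightarrow> comp A x = (\<lambda>j. if j = i then x else 0)"
proof -
  assume x: "x \<in> A i"
  show ?thesis
    by (rule comp_eq[OF A_M[OF x]], rule is_decompI[where S="{i}"]) (auto intro: A0 x)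
qed

lemma Le_iff: "x \<in> Le d \<longleftrightarrow> x \<in> M \<and> (\<forall>i>d. comp A x i = 0)"
proof
  assume "x \<in> Le d"
  then obtain c where c: "is_decomp A c x" "\<forall>i>d. c i = 0" using Le_eq by blast
  have xM: "x \<in> M" using Le_M \<open>x \<in> Le d\<close> by blast
  show "x \<in> M \<and> (\<forall>i>d. comp A x i = 0)" using comp_eq[OF xM c(1)] c(2) xM by simp
next
  assume "x \<in> M \<and> (\<forall>i>d. comp A x i = 0)"
  thus "x \<in> Le d" using Le_eq comp_decomp by blast
qed

lemma comp_sum_group:
  assumes "finite K" "\<forall>k\<in>K. f k \<in> A (g k)" "x = (\<Sum>k\<in>K. f k)"
  shows "comp A x = (\<lambda>d. \<Sum>k\<in>{k\<in>K. g k = d}. f k)"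
proof -
  have xM: "x \<in> M" using assms M_sum A_M by blast
  show ?thesis
  proof (rule comp_eq[OF xM], rule is_decompI[where S="g ` K"])
    show "\<forall>i. (\<Sum>k\<in>{k\<in>K. g k = i}. f k) \<in> A i" using assms by (auto intro!: A_sum)
    show "finite (g ` K)" using assms by simp
    show "{i. (\<Sum>k\<in>{k\<in>K. g k = i}. f k) \<noteq> 0} \<subseteq> g ` K"
    proof
      fix i assume "i \<in> {i. (\<Sum>k\<in>{k\<in>K. g k = i}. f k) \<noteq> 0}"
      show "i \<in> g ` K"
      proof (rule ccontr)
        assume "i \<notin> g ` K"
        hence "{k\<in>K. g k = i} = {}" by auto
        hence "(\<Sum>k\<in>{k\<in>K. g k = i}. f k) = 0" by (simp only: sum.empty)
        thus False using \<open>i \<in> {i. (\<Sum>k\<in>{k\<in>K. g k = i}. f k) \<noteq> 0}\<close> by blast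
      qed
    qed
    show "x = (\<Sum>i\<in>g ` K. \<Sum>k\<in>{k\<in>K. g k = i}. f k)"
    proof -
      have "(\<Sum>y\<in>g ` K. \<Sum>x | x \<in> K \<and> g x = y. f x) = sum f K"
        by (rule sum.group[OF assms(1) finite_imageI[OF assms(1)] subset_refl])
      thus ?thesis using assms(3) by simp
    qed
  qed
qed

lemma comp_add: "x \<in> M \<Longrightarrow> y \<in> M \<Longrightarrow> comp A (x + y) = comp A x + comp A y"
proof -
  assume xy: "x \<in> M" "y \<in> M"
  let ?S = "{i. comp A x i \<noteq> 0} \<union> {i. comp A y i \<noteq> 0}"
  have fS: "finite ?S" using comp_fin[OF xy(1)] comp_fin[OF xy(2)] by simp
  show ?thesis
  proof (rule comp_eq[OF M_add[OF xy]], rule is_decompI[where S="?S"])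
    show "\<forall>i. (comp A x + comp A y) i \<in> A i" using comp_in[OF xy(1)] comp_in[OF xy(2)] A_add by simp
    show "finite ?S" by (rule fS)
    show "{i. (comp A x + comp A y) i \<noteq> 0} \<subseteq> ?S" by auto
    have hx: "x = (\<Sum>i\<in>?S. comp A x i)" by (rule comp_sum[OF xy(1) fS]) blast
    have hy: "y = (\<Sum>i\<in>?S. comp A y i)" by (rule comp_sum[OF xy(2) fS]) blast
    have e: "(\<Sum>i\<in>?S. (comp A x + comp A y) i) = (\<Sum>i\<in>?S. comp A x i) + (\<Sum>i\<in>?S. comp A y i)"
      by (simp add: sum.distrib)
    show "x + y = (\<Sum>i\<in>?S. (comp A x + comp A y) i)" unfolding e by (rule arg_cong2[OF hx hy])
  qed
qed

lemma comp_uminus: "x \<in> M \<Longrightarrow> comp A (- x) = - comp A x"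
proof -
  assume xM: "x \<in> M"
  have "comp A x + comp A (-x) = comp A (x + - x)" using comp_add[OF xM M_uminus[OF xM]] by simp
  also have "\<dots> = 0" using comp_zero by (simp add: zero_fun_def)
  finally show ?thesis by (rule sym[OF minus_unique])
qed

lemma comp_diff: "x \<in> M \<Longrightarrow> y \<in> M \<Longrightarrow> comp A (x - y) = comp A x - comp A y"
proof -
  assume xM: "x \<in> M" and yM: "y \<in> M"
  have "comp A (x - y) = comp A (x + - y)" by simp
  also have "\<dots> = comp A x + comp A (-y)" by (rule comp_add[OF xM M_uminus[OF yM]])
  also have "\<dots> = comp A x - comp A y" using comp_uminus[OF yM] by simp
  finally show ?thesis .
qed

lemma Le_add: "x \<in> Le d \<Longrightarrow> y \<in> Le d \<Longrightarrow> x + y \<in> Le d"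
  using Le_iff comp_add M_add by auto

lemma Le_uminus: "x \<in> Le d \<Longrightarrow> - x \<in> Le d"
  using Le_iff comp_uminus M_uminus by auto

lemma Le_diff: "x \<in> Le d \<Longrightarrow> y \<in> Le d \<Longrightarrow> x - y \<in> Le d"
  using Le_iff comp_diff M_diff by auto

lemma Le_sum: "finite S \<Longrightarrow> (\<forall>k\<in>S. f k \<in> Le d) \<Longrightarrow> sum f S \<in> Le d"
  by (induction S rule: finite_induct) (auto intro: Le0 Le_add)

lemma Le_mono: "d \<le> d' \<Longrightarrow> x \<in> Le d \<Longrightarrow> x \<in> Le d'"
  using Le_iff by auto

lemma A_Le: "x \<in> A i \<Longrightarrow> x \<in> Le i"
  using Le_iff comp_single A_M by auto

lemma A_Le_zero: "x \<in> A i \<Longrightarrow> x \<in> Le (i - 1) \<Longrightarrow> x = 0"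
proof -
  assume "x \<in> A i" "x \<in> Le (i - 1)"
  hence "comp A x i = 0" using Le_iff by auto
  thus "x = 0" using comp_single[OF \<open>x \<in> A i\<close>] by (simp add: fun_eq_iff)
qed

lemma Le_top: "x \<in> Le d \<Longrightarrow> x - comp A x d \<in> Le (d - 1)"
proof -
  assume x: "x \<in> Le d"
  hence xM: "x \<in> M" using Le_M by blast
  have cM: "comp A x d \<in> M" using comp_in[OF xM] A_M by blast
  have "comp A (x - comp A x d) i = 0" if "i > d - 1" for i
  proof -
    have "comp A (x - comp A x d) i = comp A x i - (if i = d then comp A x d else 0)"
      using comp_diff[OF xM cM] comp_single[OF comp_in[OF xM]] by simp
    thus ?thesis using x Le_iff that by auto
  qed
  thus ?thesis using Le_iff M_diff[OF xM cM] by auto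
qed

lemma M_Le: "x \<in> M \<Longrightarrow> \<exists>d. x \<in> Le d"
proof -
  assume xM: "x \<in> M"
  let ?S = "{i. comp A x i \<noteq> 0}"
  have "finite ?S" using comp_fin[OF xM] .
  define d where "d = Max (insert 0 ?S)"
  have "\<forall>i>d. comp A x i = 0"
  proof (intro allI impI)
    fix i assume "i > d"
    hence "i \<notin> ?S" using \<open>finite ?S\<close> unfolding d_def by (meson Max_ge finite_insert insertCI not_le)
    thus "comp A x i = 0" by simp
  qed
  thus ?thesis using Le_iff xM by blast
qed

lemma comp_inj: "x \<in> M \<Longrightarrow> y \<in> M \<Longrightarrow> comp A x = comp A y \<Longrightarrow> x = y"
proof -
  assume h: "x \<in> M" "y \<in> M" "comp A x = comp A y"
  have hx: "x = (\<Sum>i\<in>{i. comp A x i \<noteq> 0}. comp A x i)" using comp_decomp[OF h(1)] unfolding is_decomp_def by blast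
  have hy: "y = (\<Sum>i\<in>{i. comp A y i \<noteq> 0}. comp A y i)" using comp_decomp[OF h(2)] unfolding is_decomp_def by blast
  show "x = y" by (rule trans[OF hx], rule trans[OF _ hy[symmetric]], simp only: h(3))
qed

lemma cos_eq: "x - y \<in> Le (d - 1) \<Longrightarrow> {x + z |z. z \<in> Le (d - 1)} = {y + z |z. z \<in> Le (d - 1)}"
proof -
  assume h: "x - y \<in> Le (d - 1)"
  have "\<exists>z'. x + z = y + z' \<and> z' \<in> Le (d - 1)" if "z \<in> Le (d - 1)" for z
    by (rule exI[of _ "x - y + z"]) (use h that Le_add in auto)
  moreover have "\<exists>z'. y + z = x + z' \<and> z' \<in> Le (d - 1)" if "z \<in> Le (d - 1)" for z
    by (rule exI[of _ "z - (x - y)"]) (use h that Le_diff in auto)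
  ultimately show ?thesis by blast
qed

lemma cos_eqD: "{x + z |z. z \<in> Le (d - 1)} = {y + z |z. z \<in> Le (d - 1)} \<Longrightarrow> x - y \<in> Le (d - 1)"
proof -
  assume "{x + z |z. z \<in> Le (d - 1)} = {y + z |z. z \<in> Le (d - 1)}"
  moreover have "x \<in> {x + z |z. z \<in> Le (d - 1)}" using Le0 by force
  ultimately obtain z where "x = y + z" "z \<in> Le (d - 1)" by auto
  thus ?thesis by simp
qed

lemma rep_cos: "\<exists>z\<in>Le (d - 1). rep {x + z |z. z \<in> Le (d - 1)} = x + z"
proof -
  have "x + 0 \<in> {x + z |z. z \<in> Le (d - 1)}" using Le0 by blast
  hence "rep {x + z |z. z \<in> Le (d - 1)} \<in> {x + z |z. z \<in> Le (d - 1)}"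
    unfolding rep_def by (rule someI)
  thus ?thesis by blast
qed

lemma cos_zero: "{0 + z |z. z \<in> Le (d - 1)} = Le (d - 1)"
  by auto

lemma cos_is_Le: "{x + z |z. z \<in> Le (d - 1)} = Le (d - 1) \<longleftrightarrow> x \<in> Le (d - 1)"
  using cos_eq[of x 0 d] cos_eqD[of x d 0] cos_zero by auto

end

locale knop =
  fixes W :: "(complex^('n::finite)^'n) set" and l \<rho> :: "complex^'n"
  assumes data: "knop_data W l"
    and L_pres: "L_preserves W l \<rho>"
    and Pdec: "P_decomp W l \<rho>"
    and Bdec: "B_decomp W l \<rho>"
begin

lemma finW: "finite W"
  using data unfolding knop_data_def finite_reflection_group_def by blast

lemma PWle_mono: "d \<le> d' \<Longrightarrow> p \<in> PWle W d \<Longrightarrow> p \<in> PWle W d'"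
  using Pdec unfolding P_decomp_def by force

lemma PWle_PW: "p \<in> PWle W d \<Longrightarrow> p \<in> PW W"
  unfolding PWle_def by blast

lemma PW_add: "p \<in> PW W \<Longrightarrow> q \<in> PW W \<Longrightarrow> p + q \<in> PW W"
proof -
  assume "p \<in> PW W" "q \<in> PW W"
  then obtain d d' where "p \<in> PWle W d" "q \<in> PWle W d'" using PW_ex_le by blast
  hence "p \<in> PWle W (max d d')" "q \<in> PWle W (max d d')"
    using PWle_mono[of d "max d d'" p] PWle_mono[of d' "max d d'" q] by auto
  thus ?thesis using PWle_add PWle_PW by blast
qed

lemma PW_sm: "p \<in> PW W \<Longrightarrow> sm c p \<in> PW W"
  using PW_ex_le PWle_sm PWle_PW by blast

lemma sm_minus: "sm (-1) p = - p"
  unfolding sm_def by (simp add: fun_eq_iff)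

lemma PW_uminus: "p \<in> PW W \<Longrightarrow> - p \<in> PW W"
proof -
  assume "p \<in> PW W"
  hence "sm (-1) p \<in> PW W" by (rule PW_sm)
  thus ?thesis by (simp only: sm_minus)
qed

lemma PW_zero: "0 \<in> PW W"
  using PWle_zero PWle_PW by blast

lemma PW_diff: "p \<in> PW W \<Longrightarrow> q \<in> PW W \<Longrightarrow> p - q \<in> PW W"
  using PW_add PW_uminus by (metis diff_conv_add_uminus)

lemma PW_sum: "finite S \<Longrightarrow> (\<forall>k\<in>S. f k \<in> PW W) \<Longrightarrow> sum f S \<in> PW W"
  by (induction S rule: finite_induct) (auto intro: PW_zero PW_add)

lemma PW_cont: "p \<in> PW W \<Longrightarrow> continuous_on UNIV p"
  unfolding PW_def using poly_cont by blast

lemma Lop_spec: assumes "p \<in> PW W"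
  shows "Lop W l \<rho> p \<in> PW W \<and> (\<forall>z. regular_pt W l z \<longrightarrow> Lop W l \<rho> p z = Lformula W l \<rho> p z)"
proof -
  from L_pres assms obtain q where q: "q \<in> PW W" "\<forall>z. regular_pt W l z \<longrightarrow> q z = Lformula W l \<rho> p z"
    unfolding L_preserves_def by blast
  have qP: "q \<in> Polys" using q(1) unfolding PW_def by blast
  have "Lop W l \<rho> p = q" unfolding Lop_def
  proof (rule the_equality)
    show "q \<in> Polys \<and> (\<forall>z. regular_pt W l z \<longrightarrow> q z = Lformula W l \<rho> p z)" using qP q by blast
    fix q' assume h: "q' \<in> Polys \<and> (\<forall>z. regular_pt W l z \<longrightarrow> q' z = Lformula W l \<rho> p z)"
    show "q' = q"
      by (rule reg_unique[OF finW poly_cont poly_cont]) (use h q qP in auto)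
  qed
  thus ?thesis using q by simp
qed

lemma Lformula_add: "Lformula W l \<rho> (p + q) z = Lformula W l \<rho> p z + Lformula W l \<rho> q z"
  unfolding Lformula_def by (simp add: algebra_simps sum.distrib)

lemma Lformula_sm: "Lformula W l \<rho> (sm c p) z = c * Lformula W l \<rho> p z"
  unfolding Lformula_def sm_def by (simp add: algebra_simps sum_distrib_left)

lemma Lop_add: assumes "p \<in> PW W" "q \<in> PW W"
  shows "Lop W l \<rho> (p + q) = Lop W l \<rho> p + Lop W l \<rho> q"
proof -
  have pq: "p + q \<in> PW W" using PW_add assms by blast
  show ?thesis
  proof (rule reg_unique[OF finW])
    show "continuous_on UNIV (Lop W l \<rho> (p + q))" using Lop_spec[OF pq] PW_cont by blast
    show "continuous_on UNIV (Lop W l \<rho> p + Lop W l \<rho> q)"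
      using Lop_spec[OF assms(1)] Lop_spec[OF assms(2)] PW_cont PW_add by blast
    show "\<forall>z. regular_pt W l z \<longrightarrow> Lop W l \<rho> (p + q) z = (Lop W l \<rho> p + Lop W l \<rho> q) z"
      using Lop_spec[OF pq] Lop_spec[OF assms(1)] Lop_spec[OF assms(2)] Lformula_add by simp
  qed
qed

lemma Lop_sm: assumes "p \<in> PW W"
  shows "Lop W l \<rho> (sm c p) = sm c (Lop W l \<rho> p)"
proof -
  have pq: "sm c p \<in> PW W" using PW_sm assms by blast
  show ?thesis
  proof (rule reg_unique[OF finW])
    show "continuous_on UNIV (Lop W l \<rho> (sm c p))" using Lop_spec[OF pq] PW_cont by blast
    show "continuous_on UNIV (sm c (Lop W l \<rho> p))"
      using Lop_spec[OF assms(1)] PW_cont PW_sm by blast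
    show "\<forall>z. regular_pt W l z \<longrightarrow> Lop W l \<rho> (sm c p) z = sm c (Lop W l \<rho> p) z"
      using Lop_spec[OF pq] Lop_spec[OF assms(1)] Lformula_sm by (simp add: sm_def)
  qed
qed

lemma Lop_PW: "p \<in> PW W \<Longrightarrow> Lop W l \<rho> p \<in> PW W"
  using Lop_spec by blast

lemma negf_add: "negf (p + q) = negf p + negf q"
  unfolding negf_def by (simp add: fun_eq_iff)

lemma negf_sm: "negf (sm c p) = sm c (negf p)"
  unfolding negf_def sm_def by (simp add: fun_eq_iff)

lemma Lminus_PW: "p \<in> PW W \<Longrightarrow> Lminus W l \<rho> p \<in> PW W"
  unfolding Lminus_def using PW_negf Lop_PW by blast

lemma Lminus_add: "p \<in> PW W \<Longrightarrow> q \<in> PW W \<Longrightarrow> Lminus W l \<rho> (p + q) = Lminus W l \<rho> p + Lminus W l \<rho> q"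
  unfolding Lminus_def negf_add by (simp add: Lop_add PW_negf negf_add)

lemma Lminus_sm: "p \<in> PW W \<Longrightarrow> Lminus W l \<rho> (sm c p) = sm c (Lminus W l \<rho> p)"
  unfolding Lminus_def negf_sm by (simp add: Lop_sm PW_negf negf_sm)

lemma E_eq: "p \<in> PW W \<Longrightarrow> Eop W l \<rho> p = mult (pair l) p - Lop W l \<rho> p"
  unfolding Eop_def restr_def by simp

lemma E_add: "p \<in> PW W \<Longrightarrow> q \<in> PW W \<Longrightarrow> Eop W l \<rho> (p + q) = Eop W l \<rho> p + Eop W l \<rho> q"
proof -
  assume hp: "p \<in> PW W" and hq: "q \<in> PW W"
  show ?thesis unfolding E_eq[OF PW_add[OF hp hq]] E_eq[OF hp] E_eq[OF hq] Lop_add[OF hp hq]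
    by (simp add: mult_def fun_eq_iff algebra_simps)
qed

lemma E_sm: "p \<in> PW W \<Longrightarrow> Eop W l \<rho> (sm c p) = sm c (Eop W l \<rho> p)"
proof -
  assume hp: "p \<in> PW W"
  show ?thesis unfolding E_eq[OF PW_sm[OF hp]] E_eq[OF hp] Lop_sm[OF hp]
    by (simp add: mult_def sm_def fun_eq_iff algebra_simps)
qed

lemma E_sum: "finite S \<Longrightarrow> (\<forall>k\<in>S. f k \<in> PW W) \<Longrightarrow> Eop W l \<rho> (sum f S) = (\<Sum>k\<in>S. Eop W l \<rho> (f k))"
proof (induction S rule: finite_induct)
  case empty
  have "Eop W l \<rho> (sm 0 0) = sm 0 (Eop W l \<rho> 0)" using E_sm PW_zero by blast
  thus ?case by (simp add: sm_def zero_fun_def)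
next
  case (insert x F)
  have e: "sum f (insert x F) = f x + sum f F" using insert.hyps by (rule sum.insert)
  have a: "Eop W l \<rho> (f x + sum f F) = Eop W l \<rho> (f x) + Eop W l \<rho> (sum f F)"
    using insert.prems PW_sum[OF insert.hyps(1)] by (intro E_add) auto
  have ih: "Eop W l \<rho> (sum f F) = (\<Sum>k\<in>F. Eop W l \<rho> (f k))" using insert.IH insert.prems by blast
  show ?case unfolding e sum.insert[OF insert.hyps] by (simp only: a ih)
qed

end

lemma sm_add: "sm c (p + q) = sm c p + sm c q"
  unfolding sm_def by (simp add: fun_eq_iff algebra_simps)

lemma sm_add2: "sm (a + b) p = sm a p + sm b p"
  unfolding sm_def by (simp add: fun_eq_iff algebra_simps)

lemma sm_sm: "sm a (sm b p) = sm (a * b) p"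
  unfolding sm_def by (simp add: fun_eq_iff)

lemma sm_zero: "sm c 0 = 0" "sm 0 p = 0"
  unfolding sm_def by (simp_all add: fun_eq_iff)

lemma restr_PW: "g \<in> PW W \<Longrightarrow> restr W X g = X g"
  unfolding restr_def by simp

lemma restr_out: "g \<notin> PW W \<Longrightarrow> restr W X g = 0"
  unfolding restr_def by simp

lemma op_comp_PW: "g \<in> PW W \<Longrightarrow> op_comp W X Y g = X (Y g)"
  unfolding op_comp_def restr_def by simp

lemma op_comp_out: "g \<notin> PW W \<Longrightarrow> op_comp W X Y g = 0"
  unfolding op_comp_def restr_def by simp

lemma op_smul_app: "op_smul c X g = sm c (X g)"
  unfolding op_smul_def sm_def by simp

context knop
begin

lemma Pd_iff: "h \<in> Pd W l \<rho> d \<longleftrightarrow> h \<in> PW W \<and> Eop W l \<rho> h = sm (of_int d + pair l \<rho>) h"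
  unfolding Pd_def sm_def by simp

sublocale P: graded "Pd W l \<rho>" "PW W" "PWle W"
proof
  show "\<And>x. x \<in> PW W \<Longrightarrow> \<exists>!c. is_decomp (Pd W l \<rho>) c x" using Pdec unfolding P_decomp_def by blast
  show "\<And>d. PWle W d = {x. \<exists>c. is_decomp (Pd W l \<rho>) c x \<and> (\<forall>i>d. c i = 0)}"
    using Pdec unfolding P_decomp_def by blast
  show "\<And>x i. x \<in> Pd W l \<rho> i \<Longrightarrow> x \<in> PW W" using Pd_iff by blast
  show "0 \<in> PW W" by (rule PW_zero)
  show "\<And>d. 0 \<in> PWle W d" by (rule PWle_zero)
  show "\<And>x d. x \<in> PWle W d \<Longrightarrow> x \<in> PW W" by (rule PWle_PW)
  show "\<And>x i y. x \<in> Pd W l \<rho> i \<Longrightarrow> y \<in> Pd W l \<rho> i \<Longrightarrow> x + y \<in> Pd W l \<rho> i"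
    unfolding Pd_iff by (simp add: E_add PW_add sm_add)
  show "\<And>x i. x \<in> Pd W l \<rho> i \<Longrightarrow> - x \<in> Pd W l \<rho> i"
  proof -
    fix x i assume "x \<in> Pd W l \<rho> i"
    hence "sm (-1) x \<in> Pd W l \<rho> i" unfolding Pd_iff by (simp add: E_sm PW_sm sm_sm mult.commute)
    thus "- x \<in> Pd W l \<rho> i" by (simp only: sm_minus)
  qed
  show "\<And>x y. x \<in> PW W \<Longrightarrow> y \<in> PW W \<Longrightarrow> x + y \<in> PW W" by (rule PW_add)
  show "\<And>x. x \<in> PW W \<Longrightarrow> - x \<in> PW W" by (rule PW_uminus)
qed

lemma E_PW: assumes g: "g \<in> PW W" shows "Eop W l \<rho> g \<in> PW W"
proof -
  let ?S = "{i. comp (Pd W l \<rho>) g i \<noteq> 0}"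
  have fS: "finite ?S" using P.comp_fin[OF g] .
  have ge: "g = (\<Sum>i\<in>?S. comp (Pd W l \<rho>) g i)" by (rule P.comp_sum[OF g fS]) blast
  have inPW: "\<forall>i\<in>?S. comp (Pd W l \<rho>) g i \<in> PW W" using P.comp_in[OF g] P.A_M by blast
  have "Eop W l \<rho> g = (\<Sum>i\<in>?S. Eop W l \<rho> (comp (Pd W l \<rho>) g i))"
    by (subst ge, rule E_sum[OF fS inPW])
  also have "\<dots> = (\<Sum>i\<in>?S. sm (of_int i + pair l \<rho>) (comp (Pd W l \<rho>) g i))"
    using P.comp_in[OF g] Pd_iff by (intro sum.cong refl) blast
  finally show ?thesis using PW_sum[OF fS] PW_sm inPW by simp
qed

lemma Balg_out: "X \<in> Balg W l \<rho> \<Longrightarrow> g \<notin> PW W \<Longrightarrow> X g = 0"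
  by (induction X rule: Balg.induct) (auto simp: restr_out op_comp_out op_smul_def fun_eq_iff)

lemma Balg_Ble: assumes X: "X \<in> Balg W l \<rho>" shows "\<exists>d. X \<in> Ble W l \<rho> d"
proof -
  from Bdec X obtain c where c: "is_decomp (Bd W l \<rho>) c X" unfolding B_decomp_def by blast
  let ?S = "{i. c i \<noteq> 0}"
  have "finite ?S" using c unfolding is_decomp_def by blast
  define d where "d = Max (insert 0 ?S)"
  have "\<forall>i>d. c i = 0"
  proof (intro allI impI)
    fix i assume "i > d"
    hence "i \<notin> ?S" using \<open>finite ?S\<close> unfolding d_def by (meson Max_ge finite_insert insertCI not_le)
    thus "c i = 0" by simp
  qed
  hence "X \<in> Ble W l \<rho> d" using Bdec c unfolding B_decomp_def by blast
  thus ?thesis by blast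
qed

lemma Ble_app: "X \<in> Ble W l \<rho> d \<Longrightarrow> h \<in> PWle W e \<Longrightarrow> X h \<in> PWle W (e + d)"
  unfolding Ble_def by blast

lemma Balg_maps: assumes "X \<in> Balg W l \<rho>" "g \<in> PW W" shows "X g \<in> PW W"
proof -
  obtain d where "X \<in> Ble W l \<rho> d" using Balg_Ble assms by blast
  moreover obtain e where "g \<in> PWle W e" using PW_ex_le assms by blast
  ultimately show ?thesis using Ble_app PWle_PW by blast
qed

lemma mult_add: "mult h (p + q) = mult h p + mult h q"
  unfolding mult_def by (simp add: fun_eq_iff algebra_simps)

lemma mult_sm: "mult h (sm c p) = sm c (mult h p)"
  unfolding mult_def sm_def by (simp add: fun_eq_iff algebra_simps)

lemma lin_restr:
  assumes "\<forall>g\<in>PW W. \<forall>g'\<in>PW W. F (g + g') = F g + F g'" "\<forall>c. \<forall>g\<in>PW W. F (sm c g) = sm c (F g)"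
  shows "(\<forall>g\<in>PW W. \<forall>g'\<in>PW W. restr W F (g + g') = restr W F g + restr W F g') \<and>
         (\<forall>c. \<forall>g\<in>PW W. restr W F (sm c g) = sm c (restr W F g))"
proof (intro conjI ballI allI)
  fix g g' assume g: "g \<in> PW W" and g': "g' \<in> PW W"
  show "restr W F (g + g') = restr W F g + restr W F g'"
    unfolding restr_PW[OF PW_add[OF g g']] restr_PW[OF g] restr_PW[OF g'] using assms g g' by blast
next
  fix c g assume g: "g \<in> PW W"
  show "restr W F (sm c g) = sm c (restr W F g)"
    unfolding restr_PW[OF PW_sm[OF g]] restr_PW[OF g] using assms g by blast
qed

lemma Balg_lin: "X \<in> Balg W l \<rho> \<Longrightarrow>
   (\<forall>g\<in>PW W. \<forall>g'\<in>PW W. X (g + g') = X g + X g') \<and> (\<forall>c. \<forall>g\<in>PW W. X (sm c g) = sm c (X g))"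
proof (induction X rule: Balg.induct)
  case (B_mult h)
  show ?case by (rule lin_restr) (simp_all add: mult_add mult_sm)
next
  case B_L
  show ?case by (rule lin_restr) (simp_all add: Lop_add Lop_sm)
next
  case B_Lminus
  show ?case by (rule lin_restr) (simp_all add: Lminus_add Lminus_sm)
next
  case (B_add X Y)
  show ?case
  proof (intro conjI ballI allI)
    fix g g' assume g: "g \<in> PW W" and g': "g' \<in> PW W"
    show "(X + Y) (g + g') = (X + Y) g + (X + Y) g'"
    proof -
      have "(X + Y) (g + g') = X (g + g') + Y (g + g')" by (rule plus_fun_apply)
      also have "\<dots> = (X g + X g') + (Y g + Y g')" using B_add.IH g g' by metis
      also have "\<dots> = (X g + Y g) + (X g' + Y g')" by (simp only: add_ac)
      also have "\<dots> = (X + Y) g + (X + Y) g'" by (simp only: plus_fun_apply)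
      finally show ?thesis .
    qed
  next
    fix c g assume g: "g \<in> PW W"
    show "(X + Y) (sm c g) = sm c ((X + Y) g)"
      using B_add.IH g by (simp only: plus_fun_apply sm_add)
  qed
next
  case (B_smul X c)
  show ?case
  proof (intro conjI ballI allI)
    fix g g' assume g: "g \<in> PW W" and g': "g' \<in> PW W"
    show "op_smul c X (g + g') = op_smul c X g + op_smul c X g'"
      using B_smul.IH g g' by (simp only: op_smul_app sm_add)
  next
    fix k g assume g: "g \<in> PW W"
    show "op_smul c X (sm k g) = sm k (op_smul c X g)"
      using B_smul.IH g by (simp only: op_smul_app sm_sm mult.commute)
  qed
next
  case (B_comp X Y)
  show ?case
  proof (intro conjI ballI allI)
    fix g g' assume g: "g \<in> PW W" and g': "g' \<in> PW W"
    have Yg: "Y g \<in> PW W" "Y g' \<in> PW W" using Balg_maps[OF B_comp.hyps(2)] g g' by auto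
    show "op_comp W X Y (g + g') = op_comp W X Y g + op_comp W X Y g'"
    proof -
      have "Y (g + g') = Y g + Y g'" using B_comp.IH g g' by blast
      moreover have "X (Y g + Y g') = X (Y g) + X (Y g')" using B_comp.IH Yg by blast
      ultimately show ?thesis unfolding op_comp_PW[OF PW_add[OF g g']] op_comp_PW[OF g] op_comp_PW[OF g']
        by (simp only:)
    qed
  next
    fix k g assume g: "g \<in> PW W"
    have Yg: "Y g \<in> PW W" using Balg_maps[OF B_comp.hyps(2)] g by auto
    show "op_comp W X Y (sm k g) = sm k (op_comp W X Y g)"
    proof -
      have "Y (sm k g) = sm k (Y g)" using B_comp.IH g by blast
      moreover have "X (sm k (Y g)) = sm k (X (Y g))" using B_comp.IH Yg by blast
      ultimately show ?thesis unfolding op_comp_PW[OF PW_sm[OF g]] op_comp_PW[OF g]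
        by (simp only:)
    qed
  qed
qed

lemma Balg_add: "X \<in> Balg W l \<rho> \<Longrightarrow> g \<in> PW W \<Longrightarrow> g' \<in> PW W \<Longrightarrow> X (g + g') = X g + X g'"
  using Balg_lin by blast

lemma Balg_sm: "X \<in> Balg W l \<rho> \<Longrightarrow> g \<in> PW W \<Longrightarrow> X (sm c g) = sm c (X g)"
  using Balg_lin by blast

lemma Balg_zero: "X \<in> Balg W l \<rho> \<Longrightarrow> X 0 = 0"
proof -
  assume X: "X \<in> Balg W l \<rho>"
  have "X (sm 0 0) = sm 0 (X 0)" by (rule Balg_sm[OF X PW_zero])
  thus ?thesis by (simp only: sm_zero)
qed

lemma Balg_sum: assumes X: "X \<in> Balg W l \<rho>"
  shows "finite S \<Longrightarrow> (\<forall>k\<in>S. f k \<in> PW W) \<Longrightarrow> X (sum f S) = (\<Sum>k\<in>S. X (f k))"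
proof (induction S rule: finite_induct)
  case empty
  show ?case by (simp only: sum.empty Balg_zero[OF X])
next
  case (insert x F)
  have e: "sum f (insert x F) = f x + sum f F" using insert.hyps by (rule sum.insert)
  have a: "X (f x + sum f F) = X (f x) + X (sum f F)"
    using insert.prems PW_sum[OF insert.hyps(1)] by (intro Balg_add[OF X]) auto
  have ih: "X (sum f F) = (\<Sum>k\<in>F. X (f k))" using insert.IH insert.prems by blast
  show ?case unfolding e sum.insert[OF insert.hyps] by (simp only: a ih)
qed

lemma Balg_uminus: "X \<in> Balg W l \<rho> \<Longrightarrow> - X \<in> Balg W l \<rho>"
proof -
  assume "X \<in> Balg W l \<rho>"
  hence "op_smul (-1) X \<in> Balg W l \<rho>" by (rule B_smul)
  moreover have "op_smul (-1) X = - X" unfolding op_smul_def by (simp add: fun_eq_iff)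
  ultimately show ?thesis by simp
qed

lemma Balg_zero_mem: "0 \<in> Balg W l \<rho>"
proof -
  have "op_smul 0 (restr W (Lop W l \<rho>)) \<in> Balg W l \<rho>" by (intro B_smul B_L)
  moreover have "op_smul 0 (restr W (Lop W l \<rho>)) = 0" unfolding op_smul_def by (simp add: fun_eq_iff)
  ultimately show ?thesis by simp
qed

lemma Bd_iff: "X \<in> Bd W l \<rho> d \<longleftrightarrow> X \<in> Balg W l \<rho> \<and>
    (\<forall>g\<in>PW W. Eop W l \<rho> (X g) - X (Eop W l \<rho> g) = sm (of_int d) (X g))"
proof
  assume "X \<in> Bd W l \<rho> d"
  hence X: "X \<in> Balg W l \<rho>" and eq: "op_comp W (Eop W l \<rho>) X - op_comp W X (Eop W l \<rho>) = op_smul (of_int d) X"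
    unfolding Bd_def by auto
  have "Eop W l \<rho> (X g) - X (Eop W l \<rho> g) = sm (of_int d) (X g)" if "g \<in> PW W" for g
    using fun_cong[OF eq, of g] that by (simp add: op_comp_PW op_smul_app)
  thus "X \<in> Balg W l \<rho> \<and> (\<forall>g\<in>PW W. Eop W l \<rho> (X g) - X (Eop W l \<rho> g) = sm (of_int d) (X g))"
    using X by blast
next
  assume h: "X \<in> Balg W l \<rho> \<and> (\<forall>g\<in>PW W. Eop W l \<rho> (X g) - X (Eop W l \<rho> g) = sm (of_int d) (X g))"
  have "(op_comp W (Eop W l \<rho>) X - op_comp W X (Eop W l \<rho>)) g = op_smul (of_int d) X g" for g
  proof (cases "g \<in> PW W")
    case True thus ?thesis using h by (simp add: op_comp_PW op_smul_app)
  next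
    case False thus ?thesis using Balg_out[OF conjunct1[OF h] False] by (simp add: op_comp_out op_smul_app sm_zero)
  qed
  thus "X \<in> Bd W l \<rho> d" using h unfolding Bd_def by (simp add: fun_eq_iff)
qed

lemma Bd_add: assumes "X \<in> Bd W l \<rho> d" "Y \<in> Bd W l \<rho> d" shows "X + Y \<in> Bd W l \<rho> d"
proof -
  have X: "X \<in> Balg W l \<rho>" and Y: "Y \<in> Balg W l \<rho>" using assms Bd_iff by auto
  have "Eop W l \<rho> ((X + Y) g) - (X + Y) (Eop W l \<rho> g) = sm (of_int d) ((X + Y) g)" if g: "g \<in> PW W" for g
  proof -
    have "Eop W l \<rho> ((X + Y) g) = Eop W l \<rho> (X g) + Eop W l \<rho> (Y g)"
      using E_add Balg_maps X Y g by simp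
    moreover have "Eop W l \<rho> (X g) - X (Eop W l \<rho> g) = sm (of_int d) (X g)"
      "Eop W l \<rho> (Y g) - Y (Eop W l \<rho> g) = sm (of_int d) (Y g)" using assms Bd_iff g by auto
    ultimately show ?thesis by (simp add: sm_add algebra_simps)
  qed
  thus ?thesis using Bd_iff B_add X Y by blast
qed

lemma Bd_smul: assumes "X \<in> Bd W l \<rho> d" shows "op_smul c X \<in> Bd W l \<rho> d"
proof -
  have X: "X \<in> Balg W l \<rho>" using assms Bd_iff by auto
  have "Eop W l \<rho> (op_smul c X g) - op_smul c X (Eop W l \<rho> g) = sm (of_int d) (op_smul c X g)" if g: "g \<in> PW W" for g
  proof -
    have e1: "Eop W l \<rho> (X g) - X (Eop W l \<rho> g) = sm (of_int d) (X g)" using assms Bd_iff g by auto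
    have "Eop W l \<rho> (op_smul c X g) - op_smul c X (Eop W l \<rho> g) = sm c (Eop W l \<rho> (X g) - X (Eop W l \<rho> g))"
      using E_sm Balg_maps X g by (simp add: op_smul_app sm_def fun_eq_iff algebra_simps)
    also have "\<dots> = sm (of_int d) (op_smul c X g)" unfolding e1 op_smul_app sm_sm by (simp add: mult.commute)
    finally show ?thesis .
  qed
  thus ?thesis using Bd_iff B_smul X by blast
qed

lemma Bd_comp: assumes "X \<in> Bd W l \<rho> i" "Y \<in> Bd W l \<rho> j" shows "op_comp W X Y \<in> Bd W l \<rho> (i + j)"
proof -
  have X: "X \<in> Balg W l \<rho>" and Y: "Y \<in> Balg W l \<rho>" using assms Bd_iff by auto
  have "Eop W l \<rho> (op_comp W X Y g) - op_comp W X Y (Eop W l \<rho> g) = sm (of_int (i + j)) (op_comp W X Y g)"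
    if g: "g \<in> PW W" for g
  proof -
    have Yg: "Y g \<in> PW W" using Balg_maps Y g by blast
    have Eg: "Eop W l \<rho> g \<in> PW W" using E_PW g by blast
    have YEg: "Y (Eop W l \<rho> g) \<in> PW W" using Balg_maps Y Eg by blast
    have ex: "Eop W l \<rho> (X (Y g)) = X (Eop W l \<rho> (Y g)) + sm (of_int i) (X (Y g))"
      using assms(1) Bd_iff Yg by (metis diff_add_cancel add.commute)
    have ey: "Eop W l \<rho> (Y g) = Y (Eop W l \<rho> g) + sm (of_int j) (Y g)"
      using assms(2) Bd_iff g by (metis diff_add_cancel add.commute)
    have "X (Eop W l \<rho> (Y g)) = X (Y (Eop W l \<rho> g)) + sm (of_int j) (X (Y g))"
      unfolding ey using Balg_add[OF X YEg PW_sm[OF Yg]] Balg_sm[OF X Yg] by simp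
    hence "Eop W l \<rho> (X (Y g)) - X (Y (Eop W l \<rho> g)) = sm (of_int j) (X (Y g)) + sm (of_int i) (X (Y g))"
      unfolding ex by simp
    also have "\<dots> = sm (of_int (i + j)) (X (Y g))" by (simp add: sm_add2[symmetric] add.commute)
    finally show ?thesis using g Eg by (simp add: op_comp_PW)
  qed
  thus ?thesis using Bd_iff B_comp X Y by blast
qed

lemma id_Balg: "restr W id \<in> Balg W l \<rho>"
proof -
  have "restr W (mult 1) \<in> Balg W l \<rho>" using B_mult PW_one by blast
  moreover have "mult 1 = id" unfolding mult_def by (simp add: fun_eq_iff)
  ultimately show ?thesis by metis
qed

lemma id_Bd: "restr W id \<in> Bd W l \<rho> 0"
  unfolding Bd_iff using id_Balg E_PW by (simp add: restr_PW sm_zero)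

sublocale B: graded "Bd W l \<rho>" "Balg W l \<rho>" "Ble W l \<rho>"
proof
  show "\<And>x. x \<in> Balg W l \<rho> \<Longrightarrow> \<exists>!c. is_decomp (Bd W l \<rho>) c x" using Bdec unfolding B_decomp_def by blast
  show "\<And>d. Ble W l \<rho> d = {x. \<exists>c. is_decomp (Bd W l \<rho>) c x \<and> (\<forall>i>d. c i = 0)}"
    using Bdec unfolding B_decomp_def by blast
  show "\<And>x i. x \<in> Bd W l \<rho> i \<Longrightarrow> x \<in> Balg W l \<rho>" using Bd_iff by blast
  show "0 \<in> Balg W l \<rho>" by (rule Balg_zero_mem)
  show "\<And>d. 0 \<in> Ble W l \<rho> d" unfolding Ble_def using Balg_zero_mem by (simp add: PWle_zero)
  show "\<And>x d. x \<in> Ble W l \<rho> d \<Longrightarrow> x \<in> Balg W l \<rho>" unfolding Ble_def by blast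
  show "\<And>x i y. x \<in> Bd W l \<rho> i \<Longrightarrow> y \<in> Bd W l \<rho> i \<Longrightarrow> x + y \<in> Bd W l \<rho> i" by (rule Bd_add)
  show "\<And>x i. x \<in> Bd W l \<rho> i \<Longrightarrow> - x \<in> Bd W l \<rho> i"
  proof -
    fix x i assume "x \<in> Bd W l \<rho> i"
    hence "op_smul (-1) x \<in> Bd W l \<rho> i" by (rule Bd_smul)
    moreover have "op_smul (-1) x = - x" unfolding op_smul_def by (simp add: fun_eq_iff)
    ultimately show "- x \<in> Bd W l \<rho> i" by simp
  qed
  show "\<And>x y. x \<in> Balg W l \<rho> \<Longrightarrow> y \<in> Balg W l \<rho> \<Longrightarrow> x + y \<in> Balg W l \<rho>" by (rule B_add)
  show "\<And>x. x \<in> Balg W l \<rho> \<Longrightarrow> - x \<in> Balg W l \<rho>" by (rule Balg_uminus)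
qed

lemma Ble_comp: "X \<in> Ble W l \<rho> a \<Longrightarrow> Y \<in> Ble W l \<rho> b \<Longrightarrow> op_comp W X Y \<in> Ble W l \<rho> (a + b)"
proof -
  assume X: "X \<in> Ble W l \<rho> a" and Y: "Y \<in> Ble W l \<rho> b"
  have "op_comp W X Y h \<in> PWle W (e + (a + b))" if h: "h \<in> PWle W e" for e h
  proof -
    have "Y h \<in> PWle W (e + b)" using Ble_app[OF Y h] .
    hence "X (Y h) \<in> PWle W (e + b + a)" using Ble_app[OF X] by blast
    thus ?thesis using op_comp_PW[OF PWle_PW[OF h]] by (simp add: algebra_simps)
  qed
  moreover have "op_comp W X Y \<in> Balg W l \<rho>" using X Y unfolding Ble_def by (blast intro: B_comp)
  ultimately show ?thesis unfolding Ble_def by blast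
qed

end

lemma conv_sum:
  fixes F :: "int \<Rightarrow> int \<Rightarrow> 'a::comm_monoid_add"
  assumes "finite A" "finite B" "\<forall>a j. j \<notin> B \<longrightarrow> F a j = 0"
  shows "(\<Sum>p\<in>{p\<in>A \<times> B. fst p + snd p = e}. F (fst p) (snd p)) = (\<Sum>d\<in>A. F d (e - d))"
proof -
  have "(\<Sum>d\<in>A. F d (e - d)) = (\<Sum>d\<in>{d\<in>A. e - d \<in> B}. F d (e - d))"
    by (rule sum.mono_neutral_right) (use assms in auto)
  also have "\<dots> = (\<Sum>p\<in>(\<lambda>d. (d, e - d)) ` {d\<in>A. e - d \<in> B}. F (fst p) (snd p))"
    by (subst sum.reindex) (auto simp: inj_on_def)
  also have "(\<lambda>d. (d, e - d)) ` {d\<in>A. e - d \<in> B} = {p\<in>A \<times> B. fst p + snd p = e}"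
    by (auto simp: image_iff)
  finally show ?thesis by simp
qed

context knop
begin

abbreviation "Bc X \<equiv> comp (Bd W l \<rho>) X"
abbreviation "Pc h \<equiv> comp (Pd W l \<rho>) h"

lemma bcos_eq: "bcos W l \<rho> d X = {X + z |z. z \<in> Ble W l \<rho> (d - 1)}"
  unfolding bcos_def by simp

lemma pcos_eq: "pcos W d h = {h + z |z. z \<in> PWle W (d - 1)}"
  unfolding pcos_def by simp

lemma Psi_app: "Psi W l \<rho> X d = bcos W l \<rho> d (Bc X d)"
  unfolding Psi_def by simp

lemma psi_app: "psi W l \<rho> h d = pcos W d (Pc h d)"
  unfolding psi_def by simp

lemma bsupp_Psi: assumes X: "X \<in> Balg W l \<rho>"
  shows "bsupp W l \<rho> (Psi W l \<rho> X) = {d. Bc X d \<noteq> 0}"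
proof -
  have "Psi W l \<rho> X d = Ble W l \<rho> (d - 1) \<longleftrightarrow> Bc X d = 0" for d
  proof -
    have "Psi W l \<rho> X d = Ble W l \<rho> (d - 1) \<longleftrightarrow> Bc X d \<in> Ble W l \<rho> (d - 1)"
      unfolding Psi_app bcos_eq by (rule B.cos_is_Le)
    also have "\<dots> \<longleftrightarrow> Bc X d = 0"
    proof
      assume "Bc X d \<in> Ble W l \<rho> (d - 1)"
      thus "Bc X d = 0" by (rule B.A_Le_zero[OF B.comp_in[OF X]])
    next
      assume "Bc X d = 0"
      thus "Bc X d \<in> Ble W l \<rho> (d - 1)" using B.Le0 by simp
    qed
    finally show ?thesis .
  qed
  thus ?thesis unfolding bsupp_def by blast
qed

lemma rep_Psi: "\<exists>z\<in>Ble W l \<rho> (d - 1). rep (Psi W l \<rho> X d) = Bc X d + z"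
  unfolding Psi_app bcos_eq by (rule B.rep_cos)

lemma rep_psi: "\<exists>z\<in>PWle W (d - 1). rep (psi W l \<rho> h d) = Pc h d + z"
  unfolding psi_app pcos_eq by (rule P.rep_cos)

lemma Bd_Ble: "X \<in> Bd W l \<rho> d \<Longrightarrow> X \<in> Ble W l \<rho> d"
  by (rule B.A_Le)

lemma Bd_Balg: "X \<in> Bd W l \<rho> d \<Longrightarrow> X \<in> Balg W l \<rho>"
  by (rule B.A_M)

lemma Ble_smul: "Y \<in> Ble W l \<rho> d \<Longrightarrow> op_smul c Y \<in> Ble W l \<rho> d"
  unfolding Ble_def by (auto simp: op_smul_app intro: B_smul PWle_sm)

lemma op_smul_add: "op_smul c (X + Y) = op_smul c X + op_smul c Y"
  unfolding op_smul_def by (simp add: fun_eq_iff algebra_simps)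

lemma op_smul_zero: "op_smul c 0 = 0"
  unfolding op_smul_def by (simp add: fun_eq_iff)

lemma op_smul_sum: "op_smul c (sum F S) = (\<Sum>i\<in>S. op_smul c (F i))"
  unfolding op_smul_def by (simp add: fun_eq_iff sum_apply_fun sum_distrib_left)

lemma op_comp_add_left: "op_comp W (X + X') Y = op_comp W X Y + op_comp W X' Y"
  unfolding op_comp_def restr_def by (simp add: fun_eq_iff)

lemma op_comp_zero_left: "op_comp W 0 Y = 0"
  unfolding op_comp_def restr_def by (simp add: fun_eq_iff)

lemma op_comp_add_right: assumes "X \<in> Balg W l \<rho>" "Y \<in> Balg W l \<rho>" "Y' \<in> Balg W l \<rho>"
  shows "op_comp W X (Y + Y') = op_comp W X Y + op_comp W X Y'"
proof (rule ext)
  fix g show "op_comp W X (Y + Y') g = (op_comp W X Y + op_comp W X Y') g"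
  proof (cases "g \<in> PW W")
    case True
    have "X (Y g + Y' g) = X (Y g) + X (Y' g)"
      by (rule Balg_add[OF assms(1) Balg_maps[OF assms(2) True] Balg_maps[OF assms(3) True]])
    thus ?thesis unfolding plus_fun_apply op_comp_PW[OF True] .
  next
    case False thus ?thesis unfolding plus_fun_apply op_comp_out[OF False] by (simp add: fun_eq_iff)
  qed
qed

lemma op_comp_zero_right: assumes "X \<in> Balg W l \<rho>" shows "op_comp W X 0 = 0"
proof (rule ext)
  fix g show "op_comp W X 0 g = 0 g"
    unfolding op_comp_def restr_def using Balg_zero[OF assms] by simp
qed

lemma op_comp_sum_left: "op_comp W (sum F S) Y = (\<Sum>i\<in>S. op_comp W (F i) Y)"
  unfolding op_comp_def restr_def by (simp add: fun_eq_iff sum_apply_fun)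

lemma op_comp_sum_right: assumes X: "X \<in> Balg W l \<rho>"
  shows "finite S \<Longrightarrow> (\<forall>i\<in>S. F i \<in> Balg W l \<rho>) \<Longrightarrow> op_comp W X (sum F S) = (\<Sum>i\<in>S. op_comp W X (F i))"
proof (induction S rule: finite_induct)
  case empty show ?case by (simp only: sum.empty op_comp_zero_right[OF X])
next
  case (insert x S)
  have s: "sum F S \<in> Balg W l \<rho>" using B.M_sum insert by blast
  have "op_comp W X (sum F (insert x S)) = op_comp W X (F x + sum F S)"
    unfolding sum.insert[OF insert.hyps] ..
  also have "\<dots> = op_comp W X (F x) + op_comp W X (sum F S)"
    using op_comp_add_right[OF X _ s] insert.prems by simp
  also have "\<dots> = op_comp W X (F x) + (\<Sum>i\<in>S. op_comp W X (F i))"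
    using insert by simp
  finally show ?case unfolding sum.insert[OF insert.hyps] .
qed

lemma Bd_Pd: assumes X: "X \<in> Bd W l \<rho> i" and h: "h \<in> Pd W l \<rho> j"
  shows "X h \<in> Pd W l \<rho> (i + j)"
proof -
  have XB: "X \<in> Balg W l \<rho>" using X Bd_iff by blast
  have hP: "h \<in> PW W" using h Pd_iff by blast
  have Xh: "X h \<in> PW W" using Balg_maps[OF XB hP] .
  have e1: "Eop W l \<rho> (X h) = X (Eop W l \<rho> h) + sm (of_int i) (X h)"
    using X Bd_iff hP by (metis diff_add_cancel add.commute)
  have e2: "Eop W l \<rho> h = sm (of_int j + pair l \<rho>) h" using h Pd_iff by blast
  have "Eop W l \<rho> (X h) = sm (of_int j + pair l \<rho>) (X h) + sm (of_int i) (X h)"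
    unfolding e1 e2 Balg_sm[OF XB hP] ..
  also have "\<dots> = sm (of_int (i + j) + pair l \<rho>) (X h)"
    unfolding sm_add2[symmetric] by (simp add: algebra_simps)
  finally show ?thesis using Xh Pd_iff by blast
qed

end

lemma ag1: "(a + z1) + (b + z2) - (a + b) = z1 + (z2::'a::ab_group_add)"
  by (simp add: algebra_simps)

lemma ag2: "(a + z1) - a = (z1::'a::ab_group_add)"
  by simp

context knop
begin

lemma bcos_cong: "x - y \<in> Ble W l \<rho> (d - 1) \<Longrightarrow> bcos W l \<rho> d x = bcos W l \<rho> d y"
  unfolding bcos_eq by (rule B.cos_eq)

lemma pcos_cong: "x - y \<in> PWle W (d - 1) \<Longrightarrow> pcos W d x = pcos W d y"
  unfolding pcos_eq by (rule P.cos_eq)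

lemma bcos_zero: "bcos W l \<rho> d 0 = Ble W l \<rho> (d - 1)"
  unfolding bcos_eq by (rule B.cos_zero)

lemma Psi_add: assumes X: "X \<in> Balg W l \<rho>" and Y: "Y \<in> Balg W l \<rho>"
  shows "Psi W l \<rho> (X + Y) = badd W l \<rho> (Psi W l \<rho> X) (Psi W l \<rho> Y)"
proof (rule ext)
  fix d
  obtain z1 where z1: "z1 \<in> Ble W l \<rho> (d - 1)" "rep (Psi W l \<rho> X d) = Bc X d + z1" using rep_Psi by blast
  obtain z2 where z2: "z2 \<in> Ble W l \<rho> (d - 1)" "rep (Psi W l \<rho> Y d) = Bc Y d + z2" using rep_Psi by blast
  have "badd W l \<rho> (Psi W l \<rho> X) (Psi W l \<rho> Y) d = bcos W l \<rho> d ((Bc X d + z1) + (Bc Y d + z2))"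
    unfolding badd_def z1(2) z2(2) ..
  also have "\<dots> = bcos W l \<rho> d (Bc X d + Bc Y d)"
  proof (rule bcos_cong)
    have "(Bc X d + z1) + (Bc Y d + z2) - (Bc X d + Bc Y d) = z1 + z2" by (rule ag1)
    thus "(Bc X d + z1) + (Bc Y d + z2) - (Bc X d + Bc Y d) \<in> Ble W l \<rho> (d - 1)"
      using B.Le_add[OF z1(1) z2(1)] by (simp only:)
  qed
  also have "\<dots> = Psi W l \<rho> (X + Y) d" unfolding Psi_app B.comp_add[OF X Y] by simp
  finally show "Psi W l \<rho> (X + Y) d = badd W l \<rho> (Psi W l \<rho> X) (Psi W l \<rho> Y) d" ..
qed

lemma comp_smul: assumes X: "X \<in> Balg W l \<rho>"
  shows "Bc (op_smul c X) = (\<lambda>d. op_smul c (Bc X d))"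
proof (rule B.comp_eq[OF B_smul[OF X]], rule is_decompI[where S="{i. Bc X i \<noteq> 0}"])
  show "\<forall>i. op_smul c (Bc X i) \<in> Bd W l \<rho> i" using Bd_smul B.comp_in[OF X] by blast
  show "finite {i. Bc X i \<noteq> 0}" by (rule B.comp_fin[OF X])
  show "{i. op_smul c (Bc X i) \<noteq> 0} \<subseteq> {i. Bc X i \<noteq> 0}"
  proof
    fix i assume "i \<in> {i. op_smul c (Bc X i) \<noteq> 0}"
    hence "op_smul c (Bc X i) \<noteq> 0" by simp
    hence "Bc X i \<noteq> 0" using op_smul_zero by metis
    thus "i \<in> {i. Bc X i \<noteq> 0}" by simp
  qed
  have "X = (\<Sum>i\<in>{i. Bc X i \<noteq> 0}. Bc X i)" by (rule B.comp_sum[OF X B.comp_fin[OF X]]) blast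
  hence "op_smul c X = op_smul c (\<Sum>i\<in>{i. Bc X i \<noteq> 0}. Bc X i)" by (rule arg_cong)
  thus "op_smul c X = (\<Sum>i\<in>{i. Bc X i \<noteq> 0}. op_smul c (Bc X i))" unfolding op_smul_sum .
qed

lemma Psi_smul: assumes X: "X \<in> Balg W l \<rho>"
  shows "Psi W l \<rho> (op_smul c X) = bsmul W l \<rho> c (Psi W l \<rho> X)"
proof (rule ext)
  fix d
  obtain z1 where z1: "z1 \<in> Ble W l \<rho> (d - 1)" "rep (Psi W l \<rho> X d) = Bc X d + z1" using rep_Psi by blast
  have "bsmul W l \<rho> c (Psi W l \<rho> X) d = bcos W l \<rho> d (op_smul c (Bc X d) + op_smul c z1)"
    unfolding bsmul_def z1(2) op_smul_add ..
  also have "\<dots> = bcos W l \<rho> d (op_smul c (Bc X d))"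
    by (rule bcos_cong) (simp only: ag2 Ble_smul[OF z1(1)])
  also have "\<dots> = Psi W l \<rho> (op_smul c X) d" unfolding Psi_app comp_smul[OF X] ..
  finally show "Psi W l \<rho> (op_smul c X) d = bsmul W l \<rho> c (Psi W l \<rho> X) d" ..
qed

lemma Psi_id: "Psi W l \<rho> (restr W id) = bone W l \<rho>"
proof (rule ext)
  fix d
  have c: "Bc (restr W id) d = (if d = 0 then restr W id else 0)"
    using B.comp_single[OF id_Bd] by simp
  show "Psi W l \<rho> (restr W id) d = bone W l \<rho> d"
  proof (cases "d = 0")
    case True thus ?thesis unfolding Psi_app c bone_def by simp
  next
    case False thus ?thesis unfolding Psi_app c bone_def using bcos_zero by simp
  qed
qed

lemma Psi_in: assumes X: "X \<in> Balg W l \<rho>" shows "Psi W l \<rho> X \<in> Bbar W l \<rho>"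
proof -
  have "\<forall>d. \<exists>Z\<in>Ble W l \<rho> d. Psi W l \<rho> X d = bcos W l \<rho> d Z"
    using Psi_app Bd_Ble B.comp_in[OF X] by blast
  moreover have "finite (bsupp W l \<rho> (Psi W l \<rho> X))" unfolding bsupp_Psi[OF X] by (rule B.comp_fin[OF X])
  ultimately show ?thesis unfolding Bbar_def by blast
qed

lemma Psi_inj: "inj_on (Psi W l \<rho>) (Balg W l \<rho>)"
proof (rule inj_onI)
  fix X Y assume X: "X \<in> Balg W l \<rho>" and Y: "Y \<in> Balg W l \<rho>" and eq: "Psi W l \<rho> X = Psi W l \<rho> Y"
  have "Bc X d = Bc Y d" for d
  proof -
    have "bcos W l \<rho> d (Bc X d) = bcos W l \<rho> d (Bc Y d)" using fun_cong[OF eq, of d] unfolding Psi_app .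
    hence "Bc X d - Bc Y d \<in> Ble W l \<rho> (d - 1)" unfolding bcos_eq by (rule B.cos_eqD)
    moreover have "Bc X d - Bc Y d \<in> Bd W l \<rho> d" using B.A_diff B.comp_in X Y by blast
    ultimately have "Bc X d - Bc Y d = 0" using B.A_Le_zero by blast
    thus ?thesis by simp
  qed
  thus "X = Y" using B.comp_inj[OF X Y] by blast
qed

lemma Psi_surj: "Bbar W l \<rho> \<subseteq> Psi W l \<rho> ` Balg W l \<rho>"
proof
  fix a assume a: "a \<in> Bbar W l \<rho>"
  hence "\<forall>d. \<exists>Z. Z \<in> Ble W l \<rho> d \<and> a d = bcos W l \<rho> d Z" unfolding Bbar_def by blast
  then obtain Z where Z: "\<forall>d. Z d \<in> Ble W l \<rho> d \<and> a d = bcos W l \<rho> d (Z d)"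
    using choice[of "\<lambda>d Z. Z \<in> Ble W l \<rho> d \<and> a d = bcos W l \<rho> d Z"] by blast
  let ?S = "bsupp W l \<rho> a"
  have fS: "finite ?S" using a unfolding Bbar_def by blast
  define X where "X = (\<Sum>d\<in>?S. Bc (Z d) d)"
  have ZL: "Z d \<in> Ble W l \<rho> d" for d using Z by blast
  have ZM: "Z d \<in> Balg W l \<rho>" for d using B.Le_M[OF ZL] .
  have inA: "\<forall>d\<in>?S. Bc (Z d) d \<in> Bd W l \<rho> (id d)" using B.comp_in[OF ZM] by simp
  have XM: "X \<in> Balg W l \<rho>" unfolding X_def
    by (rule B.M_sum[OF fS]) (use B.A_M[OF B.comp_in[OF ZM]] in blast)
  have cX: "Bc X = (\<lambda>e. \<Sum>d\<in>{d\<in>?S. id d = e}. Bc (Z d) d)"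
    by (rule B.comp_sum_group[OF fS inA]) (simp add: X_def)
  have "Psi W l \<rho> X e = a e" for e
  proof (cases "e \<in> ?S")
    case True
    hence "{d\<in>?S. id d = e} = {e}" by auto
    hence "Bc X e = Bc (Z e) e" unfolding cX by simp
    hence "Psi W l \<rho> X e = bcos W l \<rho> e (Bc (Z e) e)" unfolding Psi_app by simp
    also have "\<dots> = bcos W l \<rho> e (Z e)"
    proof (rule bcos_cong)
      have "Z e - Bc (Z e) e \<in> Ble W l \<rho> (e - 1)" by (rule B.Le_top[OF ZL])
      hence "- (Z e - Bc (Z e) e) \<in> Ble W l \<rho> (e - 1)" by (rule B.Le_uminus)
      thus "Bc (Z e) e - Z e \<in> Ble W l \<rho> (e - 1)" by simp
    qed
    also have "\<dots> = a e" using Z by metis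
    finally show ?thesis .
  next
    case False
    hence e0: "{d\<in>?S. id d = e} = {}" by auto
    have b0: "Bc X e = 0" by (simp only: cX e0 sum.empty)
    have "Psi W l \<rho> X e = bcos W l \<rho> e 0" unfolding Psi_app b0 ..
    also have "\<dots> = Ble W l \<rho> (e - 1)" by (rule bcos_zero)
    also have "\<dots> = a e" using False unfolding bsupp_def by simp
    finally show ?thesis .
  qed
  hence "a = Psi W l \<rho> X" by auto
  thus "a \<in> Psi W l \<rho> ` Balg W l \<rho>" using XM by blast
qed

lemma Psi_bij: "bij_betw (Psi W l \<rho>) (Balg W l \<rho>) (Bbar W l \<rho>)"
  unfolding bij_betw_def using Psi_inj Psi_in Psi_surj by blast

end

lemma ag3: "(x::'a::ab_group_add) = a + b + c \<Longrightarrow> x - a = b + c"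
  by (simp add: algebra_simps)

context knop
begin

lemma cong_prod:
  assumes A: "A \<in> Bd W l \<rho> a" and B: "B \<in> Bd W l \<rho> b"
    and z1: "z1 \<in> Ble W l \<rho> (a - 1)" and z2: "z2 \<in> Ble W l \<rho> (b - 1)"
  shows "op_comp W (A + z1) (B + z2) - op_comp W A B \<in> Ble W l \<rho> (a + b - 1)"
proof -
  have AM: "A \<in> Balg W l \<rho>" and BM: "B \<in> Balg W l \<rho>" using A B Bd_Balg by auto
  have z1M: "z1 \<in> Balg W l \<rho>" and z2M: "z2 \<in> Balg W l \<rho>" using z1 z2 B.Le_M by auto
  have "op_comp W (A + z1) (B + z2) = op_comp W A (B + z2) + op_comp W z1 (B + z2)"
    by (rule op_comp_add_left)
  also have "op_comp W A (B + z2) = op_comp W A B + op_comp W A z2"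
    by (rule op_comp_add_right[OF AM BM z2M])
  finally have "op_comp W (A + z1) (B + z2) - op_comp W A B = op_comp W A z2 + op_comp W z1 (B + z2)"
    by (rule ag3)
  moreover have "op_comp W A z2 \<in> Ble W l \<rho> (a + b - 1)"
  proof -
    have "op_comp W A z2 \<in> Ble W l \<rho> (a + (b - 1))" by (rule Ble_comp[OF Bd_Ble[OF A] z2])
    thus ?thesis by (simp add: algebra_simps)
  qed
  moreover have "op_comp W z1 (B + z2) \<in> Ble W l \<rho> (a + b - 1)"
  proof -
    have "z2 \<in> Ble W l \<rho> b" using B.Le_mono[OF _ z2] by simp
    hence "B + z2 \<in> Ble W l \<rho> b" using B.Le_add Bd_Ble[OF B] by blast
    hence "op_comp W z1 (B + z2) \<in> Ble W l \<rho> (a - 1 + b)" by (rule Ble_comp[OF z1])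
    thus ?thesis by (simp add: algebra_simps)
  qed
  ultimately show ?thesis using B.Le_add by simp
qed

lemma comp_prod: assumes X: "X \<in> Balg W l \<rho>" and Y: "Y \<in> Balg W l \<rho>"
  shows "Bc (op_comp W X Y) d = (\<Sum>i\<in>{i. Bc X i \<noteq> 0}. op_comp W (Bc X i) (Bc Y (d - i)))"
proof -
  let ?SX = "{i. Bc X i \<noteq> 0}" and ?SY = "{i. Bc Y i \<noteq> 0}"
  have fX: "finite ?SX" and fY: "finite ?SY" using B.comp_fin X Y by auto
  have XiM: "Bc X i \<in> Balg W l \<rho>" for i using B.A_M[OF B.comp_in[OF X]] .
  have YjM: "Bc Y j \<in> Balg W l \<rho>" for j using B.A_M[OF B.comp_in[OF Y]] .
  have eX: "X = (\<Sum>i\<in>?SX. Bc X i)" by (rule B.comp_sum[OF X fX]) blast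
  have eY: "Y = (\<Sum>j\<in>?SY. Bc Y j)" by (rule B.comp_sum[OF Y fY]) blast
  let ?f = "\<lambda>p. op_comp W (Bc X (fst p)) (Bc Y (snd p))"
  have "op_comp W X Y = op_comp W (\<Sum>i\<in>?SX. Bc X i) Y" by (rule arg_cong[OF eX])
  also have "\<dots> = (\<Sum>i\<in>?SX. op_comp W (Bc X i) Y)" by (rule op_comp_sum_left)
  also have "\<dots> = (\<Sum>i\<in>?SX. \<Sum>j\<in>?SY. op_comp W (Bc X i) (Bc Y j))"
  proof (rule sum.cong[OF refl])
    fix i
    have "op_comp W (Bc X i) Y = op_comp W (Bc X i) (\<Sum>j\<in>?SY. Bc Y j)" by (rule arg_cong[OF eY])
    also have "\<dots> = (\<Sum>j\<in>?SY. op_comp W (Bc X i) (Bc Y j))"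
      by (rule op_comp_sum_right[OF XiM fY]) (use YjM in blast)
    finally show "op_comp W (Bc X i) Y = (\<Sum>j\<in>?SY. op_comp W (Bc X i) (Bc Y j))" .
  qed
  also have "\<dots> = (\<Sum>p\<in>?SX \<times> ?SY. ?f p)"
    by (simp add: sum.cartesian_product split_beta)
  finally have eq: "op_comp W X Y = (\<Sum>p\<in>?SX \<times> ?SY. ?f p)" .
  have inA: "\<forall>p\<in>?SX \<times> ?SY. ?f p \<in> Bd W l \<rho> (fst p + snd p)"
    using Bd_comp B.comp_in X Y by blast
  have "Bc (op_comp W X Y) = (\<lambda>d. \<Sum>p\<in>{p\<in>?SX \<times> ?SY. fst p + snd p = d}. ?f p)"
    by (rule B.comp_sum_group[OF _ inA eq]) (use fX fY in simp)
  hence "Bc (op_comp W X Y) d = (\<Sum>p\<in>{p\<in>?SX \<times> ?SY. fst p + snd p = d}. ?f p)" by simp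
  also have "\<dots> = (\<Sum>i\<in>?SX. op_comp W (Bc X i) (Bc Y (d - i)))"
  proof (rule conv_sum[OF fX fY])
    show "\<forall>a j. j \<notin> ?SY \<longrightarrow> op_comp W (Bc X a) (Bc Y j) = 0"
      using op_comp_zero_right[OF XiM] by simp
  qed
  finally show ?thesis .
qed

lemma Psi_comp: assumes X: "X \<in> Balg W l \<rho>" and Y: "Y \<in> Balg W l \<rho>"
  shows "Psi W l \<rho> (op_comp W X Y) = bmul W l \<rho> (Psi W l \<rho> X) (Psi W l \<rho> Y)"
proof (rule ext)
  fix d
  let ?SX = "{i. Bc X i \<noteq> 0}"
  have fX: "finite ?SX" using B.comp_fin X by auto
  have "bmul W l \<rho> (Psi W l \<rho> X) (Psi W l \<rho> Y) d =
      bcos W l \<rho> d (\<Sum>i\<in>?SX. op_comp W (rep (Psi W l \<rho> X i)) (rep (Psi W l \<rho> Y (d - i))))"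
    unfolding bmul_def bsupp_Psi[OF X] ..
  also have "\<dots> = bcos W l \<rho> d (\<Sum>i\<in>?SX. op_comp W (Bc X i) (Bc Y (d - i)))"
  proof (rule bcos_cong)
    have "op_comp W (rep (Psi W l \<rho> X i)) (rep (Psi W l \<rho> Y (d - i))) - op_comp W (Bc X i) (Bc Y (d - i))
        \<in> Ble W l \<rho> (d - 1)" for i
    proof -
      obtain z1 where z1: "z1 \<in> Ble W l \<rho> (i - 1)" "rep (Psi W l \<rho> X i) = Bc X i + z1" using rep_Psi by blast
      obtain z2 where z2: "z2 \<in> Ble W l \<rho> (d - i - 1)" "rep (Psi W l \<rho> Y (d - i)) = Bc Y (d - i) + z2"
        using rep_Psi by blast
      have "op_comp W (Bc X i + z1) (Bc Y (d - i) + z2) - op_comp W (Bc X i) (Bc Y (d - i)) \<in> Ble W l \<rho> (i + (d - i) - 1)"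
        by (rule cong_prod[OF B.comp_in[OF X] B.comp_in[OF Y] z1(1) z2(1)])
      thus ?thesis unfolding z1(2) z2(2) by simp
    qed
    hence "(\<Sum>i\<in>?SX. op_comp W (rep (Psi W l \<rho> X i)) (rep (Psi W l \<rho> Y (d - i))) - op_comp W (Bc X i) (Bc Y (d - i)))
        \<in> Ble W l \<rho> (d - 1)" by (intro B.Le_sum[OF fX]) blast
    thus "(\<Sum>i\<in>?SX. op_comp W (rep (Psi W l \<rho> X i)) (rep (Psi W l \<rho> Y (d - i)))) -
          (\<Sum>i\<in>?SX. op_comp W (Bc X i) (Bc Y (d - i))) \<in> Ble W l \<rho> (d - 1)"
      by (simp only: sum_subtractf)
  qed
  also have "\<dots> = Psi W l \<rho> (op_comp W X Y) d" unfolding Psi_app comp_prod[OF X Y] ..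
  finally show "Psi W l \<rho> (op_comp W X Y) d = bmul W l \<rho> (Psi W l \<rho> X) (Psi W l \<rho> Y) d" ..
qed

lemma cong_act:
  assumes A: "A \<in> Bd W l \<rho> a" and k: "k \<in> Pd W l \<rho> b"
    and z1: "z1 \<in> Ble W l \<rho> (a - 1)" and z2: "z2 \<in> PWle W (b - 1)"
  shows "(A + z1) (k + z2) - A k \<in> PWle W (a + b - 1)"
proof -
  have AM: "A \<in> Balg W l \<rho>" using A Bd_Balg by auto
  have kP: "k \<in> PW W" and z2P: "z2 \<in> PW W" using k z2 P.A_M PWle_PW by auto
  have e1: "(A + z1) (k + z2) = A (k + z2) + z1 (k + z2)" by (rule plus_fun_apply)
  have e2: "A (k + z2) = A k + A z2" by (rule Balg_add[OF AM kP z2P])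
  have "(A + z1) (k + z2) = A k + A z2 + z1 (k + z2)" by (simp only: e1 e2)
  hence eq: "(A + z1) (k + z2) - A k = A z2 + z1 (k + z2)" by (rule ag3)
  have m1: "A z2 \<in> PWle W (a + b - 1)"
  proof -
    have "A z2 \<in> PWle W (b - 1 + a)" by (rule Ble_app[OF Bd_Ble[OF A] z2])
    thus ?thesis by (simp add: algebra_simps)
  qed
  have m2: "z1 (k + z2) \<in> PWle W (a + b - 1)"
  proof -
    have "z2 \<in> PWle W b" using P.Le_mono[OF _ z2] by simp
    hence "k + z2 \<in> PWle W b" using P.Le_add P.A_Le[OF k] by blast
    hence "z1 (k + z2) \<in> PWle W (b + (a - 1))" by (rule Ble_app[OF z1])
    thus ?thesis by (simp add: algebra_simps)
  qed
  show ?thesis unfolding eq by (rule P.Le_add[OF m1 m2])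
qed

lemma comp_act: assumes X: "X \<in> Balg W l \<rho>" and h: "h \<in> PW W"
  shows "Pc (X h) e = (\<Sum>i\<in>{i. Bc X i \<noteq> 0}. Bc X i (Pc h (e - i)))"
proof -
  let ?SX = "{i. Bc X i \<noteq> 0}" and ?Sh = "{i. Pc h i \<noteq> 0}"
  have fX: "finite ?SX" using B.comp_fin X by auto
  have fh: "finite ?Sh" using P.comp_fin h by auto
  have XiM: "Bc X i \<in> Balg W l \<rho>" for i using B.A_M[OF B.comp_in[OF X]] .
  have hjP: "Pc h j \<in> PW W" for j using P.A_M[OF P.comp_in[OF h]] .
  have eX: "X = (\<Sum>i\<in>?SX. Bc X i)" by (rule B.comp_sum[OF X fX]) blast
  have eh: "h = (\<Sum>j\<in>?Sh. Pc h j)" by (rule P.comp_sum[OF h fh]) blast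
  let ?f = "\<lambda>p. Bc X (fst p) (Pc h (snd p))"
  have "X h = (\<Sum>i\<in>?SX. Bc X i) h" by (rule fun_cong[OF eX])
  also have "\<dots> = (\<Sum>i\<in>?SX. Bc X i h)" by (rule sum_apply_fun)
  also have "\<dots> = (\<Sum>i\<in>?SX. \<Sum>j\<in>?Sh. Bc X i (Pc h j))"
  proof (rule sum.cong[OF refl])
    fix i
    have "Bc X i h = Bc X i (\<Sum>j\<in>?Sh. Pc h j)" by (rule arg_cong[OF eh])
    also have "\<dots> = (\<Sum>j\<in>?Sh. Bc X i (Pc h j))"
      by (rule Balg_sum[OF XiM fh]) (use hjP in blast)
    finally show "Bc X i h = (\<Sum>j\<in>?Sh. Bc X i (Pc h j))" .
  qed
  also have "\<dots> = (\<Sum>p\<in>?SX \<times> ?Sh. ?f p)"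
    by (simp add: sum.cartesian_product split_beta)
  finally have eq: "X h = (\<Sum>p\<in>?SX \<times> ?Sh. ?f p)" .
  have inA: "\<forall>p\<in>?SX \<times> ?Sh. ?f p \<in> Pd W l \<rho> (fst p + snd p)"
    using Bd_Pd B.comp_in X P.comp_in h by blast
  have "Pc (X h) = (\<lambda>d. \<Sum>p\<in>{p\<in>?SX \<times> ?Sh. fst p + snd p = d}. ?f p)"
    by (rule P.comp_sum_group[OF _ inA eq]) (use fX fh in simp)
  hence "Pc (X h) e = (\<Sum>p\<in>{p\<in>?SX \<times> ?Sh. fst p + snd p = e}. ?f p)" by simp
  also have "\<dots> = (\<Sum>i\<in>?SX. Bc X i (Pc h (e - i)))"
  proof (rule conv_sum[OF fX fh])
    show "\<forall>a j. j \<notin> ?Sh \<longrightarrow> Bc X a (Pc h j) = 0"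
      using Balg_zero[OF XiM] by simp
  qed
  finally show ?thesis .
qed

lemma psi_act: assumes X: "X \<in> Balg W l \<rho>" and h: "h \<in> PW W"
  shows "psi W l \<rho> (X h) = bact W l \<rho> (Psi W l \<rho> X) (psi W l \<rho> h)"
proof (rule ext)
  fix e
  let ?SX = "{i. Bc X i \<noteq> 0}"
  have fX: "finite ?SX" using B.comp_fin X by auto
  have "bact W l \<rho> (Psi W l \<rho> X) (psi W l \<rho> h) e =
      pcos W e (\<Sum>d\<in>?SX. rep (Psi W l \<rho> X d) (rep (psi W l \<rho> h (e - d))))"
    unfolding bact_def bsupp_Psi[OF X] ..
  also have "\<dots> = pcos W e (\<Sum>d\<in>?SX. Bc X d (Pc h (e - d)))"
  proof (rule pcos_cong)
    have "rep (Psi W l \<rho> X d) (rep (psi W l \<rho> h (e - d))) - Bc X d (Pc h (e - d)) \<in> PWle W (e - 1)" for d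
    proof -
      obtain z1 where z1: "z1 \<in> Ble W l \<rho> (d - 1)" "rep (Psi W l \<rho> X d) = Bc X d + z1" using rep_Psi by blast
      obtain z2 where z2: "z2 \<in> PWle W (e - d - 1)" "rep (psi W l \<rho> h (e - d)) = Pc h (e - d) + z2"
        using rep_psi by blast
      have "(Bc X d + z1) (Pc h (e - d) + z2) - Bc X d (Pc h (e - d)) \<in> PWle W (d + (e - d) - 1)"
        by (rule cong_act[OF B.comp_in[OF X] P.comp_in[OF h] z1(1) z2(1)])
      thus ?thesis unfolding z1(2) z2(2) by simp
    qed
    hence "(\<Sum>d\<in>?SX. rep (Psi W l \<rho> X d) (rep (psi W l \<rho> h (e - d))) - Bc X d (Pc h (e - d)))
        \<in> PWle W (e - 1)" by (intro P.Le_sum[OF fX]) blast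
    thus "(\<Sum>d\<in>?SX. rep (Psi W l \<rho> X d) (rep (psi W l \<rho> h (e - d)))) -
          (\<Sum>d\<in>?SX. Bc X d (Pc h (e - d))) \<in> PWle W (e - 1)"
      by (simp only: sum_subtractf)
  qed
  also have "\<dots> = psi W l \<rho> (X h) e" unfolding psi_app comp_act[OF X h] ..
  finally show "psi W l \<rho> (X h) e = bact W l \<rho> (Psi W l \<rho> X) (psi W l \<rho> h) e" ..
qed

end

theorem theorem8p3:
  fixes W :: "(complex^('n::finite)^'n) set" and l \<rho> :: "complex^'n"
  assumes data: "knop_data W l"
    and L_pres: "L_preserves W l \<rho>"
    and Pdec: "P_decomp W l \<rho>"
    and Bdec: "B_decomp W l \<rho>"
    and rho: "\<rho> \<in> V0 W" "dominant W \<rho>"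
  shows "bij_betw (Psi W l \<rho>) (Balg W l \<rho>) (Bbar W l \<rho>)
    \<and> (\<forall>X\<in>Balg W l \<rho>. \<forall>Y\<in>Balg W l \<rho>. Psi W l \<rho> (X + Y) = badd W l \<rho> (Psi W l \<rho> X) (Psi W l \<rho> Y))
    \<and> (\<forall>c. \<forall>X\<in>Balg W l \<rho>. Psi W l \<rho> (op_smul c X) = bsmul W l \<rho> c (Psi W l \<rho> X))
    \<and> (\<forall>X\<in>Balg W l \<rho>. \<forall>Y\<in>Balg W l \<rho>.
         Psi W l \<rho> (op_comp W X Y) = bmul W l \<rho> (Psi W l \<rho> X) (Psi W l \<rho> Y))
    \<and> Psi W l \<rho> (restr W id) = bone W l \<rho>
    \<and> (\<forall>X\<in>Balg W l \<rho>. \<forall>h\<in>PW W. psi W l \<rho> (X h) = bact W l \<rho> (Psi W l \<rho> X) (psi W l \<rho> h))"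
proof -
  interpret knop W l \<rho> using data L_pres Pdec Bdec by unfold_locales
  show ?thesis using Psi_bij Psi_add Psi_smul Psi_comp Psi_id psi_act by blast
qed

end
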